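(* Let $(A,d,F)$ be a filtered complex. There is a filtered homotopy transfer diagram consisting of a filtered complex $(M,d,F)$, morphisms of filtered complexes $f:(A,d,F)\to (M,d,F)$ and $g:(M,d,F)\to (A,d,F)$, and a filtered homotopy $h$ from the identity of $A$ to $gf$, where $(M,d,F)$ is such that \[F^pM^n\cong \bigoplus_{q\geq p}E^{q,n-q}_1(A)\text{ and }d(F^pM)\subseteq F^{p+1}M.\] Furthermore, the maps $f$ and $g$ are filtered quasi-isomorphisms.
   Context: All filtered complexes $(A,d,F)$ are cochain complexes over a field $\mathbf{k}$ with bounded below, exhaustive, decreasing filtrations $F^{p+1}A\subseteq F^pA$ satisfying $d(F^pA^n)\subseteq F^pA^{n+1}$. $E_1(A)$ denotes the first page of the spectral sequence associated to the filtration. A morphism of filtered complexes $f$ is a filtered quasi-isomorphism if each restriction $F^pf$ is a quasi-isomorphism. A filtered homotopy from $f$ to $g$ (maps $A\to B$ of filtered complexes) is a map $h:A\to B[-1]$ with $h(F^pA^n)\subseteq F^pB^{n-1}$ and $hd+dh=f-g$. A filtered homotopy transfer diagram between $(A,d,F)$ and $(B,d,F)$ consists of morphisms of filtered complexes $f:A\to B$, $g:B\to A$ and a filtered homotopy $h$ from the identity of $A$ to $gf$. *)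

theory Defs
  imports Main "HOL.Vector_Spaces"
begin

text \<open>
  Graded vector spaces over a field are modelled inside an ambient type 'a on which
  the field 'k acts by the scalar multiplication s (assumed to be a vector space).
  A decreasing filtration is F :: int => int => 'a set with F p n the piece F^p C^n.
\<close>

definition subsp :: "('k::field \<Rightarrow> 'a::ab_group_add \<Rightarrow> 'a) \<Rightarrow> 'a set \<Rightarrow> bool" where
  "subsp s S \<longleftrightarrow> 0 \<in> S \<and> (\<forall>x\<in>S. \<forall>y\<in>S. x + y \<in> S) \<and> (\<forall>c. \<forall>x\<in>S. s c x \<in> S)"

definition lin_on :: "('k::field \<Rightarrow> 'a::ab_group_add \<Rightarrow> 'a) \<Rightarrow> 'a set \<Rightarrow> ('a \<Rightarrow> 'a) \<Rightarrow> bool" where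
  "lin_on s V f \<longleftrightarrow>
     (\<forall>x\<in>V. \<forall>y\<in>V. f (x + y) = f x + f y) \<and> (\<forall>c. \<forall>x\<in>V. f (s c x) = s c (f x))"

definition cochain_complex ::
  "('k::field \<Rightarrow> 'a::ab_group_add \<Rightarrow> 'a) \<Rightarrow> (int \<Rightarrow> 'a set) \<Rightarrow> (int \<Rightarrow> 'a \<Rightarrow> 'a) \<Rightarrow> bool" where
  "cochain_complex s C d \<longleftrightarrow>
     (\<forall>n. subsp s (C n)) \<and>
     (\<forall>n. lin_on s (C n) (d n)) \<and>
     (\<forall>n. d n ` C n \<subseteq> C (n + 1)) \<and>
     (\<forall>n. \<forall>x\<in>C n. d (n + 1) (d n x) = 0)"

definition filtered_complex ::
  "('k::field \<Rightarrow> 'a::ab_group_add \<Rightarrow> 'a) \<Rightarrow> (int \<Rightarrow> 'a set) \<Rightarrow> (int \<Rightarrow> 'a \<Rightarrow> 'a)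
     \<Rightarrow> (int \<Rightarrow> int \<Rightarrow> 'a set) \<Rightarrow> bool" where
  "filtered_complex s C d F \<longleftrightarrow>
     cochain_complex s C d \<and>
     (\<forall>p n. subsp s (F p n) \<and> F p n \<subseteq> C n) \<and>
     (\<forall>p n. F (p + 1) n \<subseteq> F p n) \<and>
     (\<forall>p n. d n ` F p n \<subseteq> F p (n + 1)) \<and>
     (\<forall>n. (\<Union>p. F p n) = C n) \<and>
     (\<forall>n. \<exists>p. F p n = {0})"

definition filtered_morphism ::
  "('k::field \<Rightarrow> 'a::ab_group_add \<Rightarrow> 'a) \<Rightarrow> (int \<Rightarrow> 'a set) \<Rightarrow> (int \<Rightarrow> 'a \<Rightarrow> 'a) \<Rightarrow> (int \<Rightarrow> int \<Rightarrow> 'a set)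
     \<Rightarrow> (int \<Rightarrow> 'a set) \<Rightarrow> (int \<Rightarrow> 'a \<Rightarrow> 'a) \<Rightarrow> (int \<Rightarrow> int \<Rightarrow> 'a set)
     \<Rightarrow> (int \<Rightarrow> 'a \<Rightarrow> 'a) \<Rightarrow> bool" where
  "filtered_morphism s C d F C' d' F' f \<longleftrightarrow>
     (\<forall>n. lin_on s (C n) (f n)) \<and>
     (\<forall>n. f n ` C n \<subseteq> C' n) \<and>
     (\<forall>n. \<forall>x\<in>C n. f (n + 1) (d n x) = d' n (f n x)) \<and>
     (\<forall>p n. f n ` F p n \<subseteq> F' p n)"

text \<open>The map induced by f on H^n of the subcomplexes F^p is bijective (written out on
  cocycles modulo coboundaries, without forming quotients).\<close>
definition quasi_iso_on ::
  "(int \<Rightarrow> 'a::ab_group_add set) \<Rightarrow> (int \<Rightarrow> 'a \<Rightarrow> 'a) \<Rightarrow> (int \<Rightarrow> 'a set) \<Rightarrow> (int \<Rightarrow> 'a \<Rightarrow> 'a)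
     \<Rightarrow> (int \<Rightarrow> 'a \<Rightarrow> 'a) \<Rightarrow> bool" where
  "quasi_iso_on C d C' d' f \<longleftrightarrow>
     (\<forall>n. \<forall>y\<in>C' n. d' n y = 0 \<longrightarrow>
         (\<exists>x\<in>C n. d n x = 0 \<and> y - f n x \<in> d' (n - 1) ` C' (n - 1))) \<and>
     (\<forall>n. \<forall>x\<in>C n. d n x = 0 \<and> f n x \<in> d' (n - 1) ` C' (n - 1) \<longrightarrow>
         x \<in> d (n - 1) ` C (n - 1))"

definition filtered_quasi_iso ::
  "(int \<Rightarrow> 'a::ab_group_add \<Rightarrow> 'a) \<Rightarrow> (int \<Rightarrow> int \<Rightarrow> 'a set)
     \<Rightarrow> (int \<Rightarrow> 'a \<Rightarrow> 'a) \<Rightarrow> (int \<Rightarrow> int \<Rightarrow> 'a set) \<Rightarrow> (int \<Rightarrow> 'a \<Rightarrow> 'a) \<Rightarrow> bool" where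
  "filtered_quasi_iso d F d' F' f \<longleftrightarrow> (\<forall>p. quasi_iso_on (F p) d (F' p) d' f)"

definition filtered_homotopy ::
  "('k::field \<Rightarrow> 'a::ab_group_add \<Rightarrow> 'a) \<Rightarrow> (int \<Rightarrow> 'a set) \<Rightarrow> (int \<Rightarrow> 'a \<Rightarrow> 'a) \<Rightarrow> (int \<Rightarrow> int \<Rightarrow> 'a set)
     \<Rightarrow> (int \<Rightarrow> 'a set) \<Rightarrow> (int \<Rightarrow> 'a \<Rightarrow> 'a) \<Rightarrow> (int \<Rightarrow> int \<Rightarrow> 'a set)
     \<Rightarrow> (int \<Rightarrow> 'a \<Rightarrow> 'a) \<Rightarrow> (int \<Rightarrow> 'a \<Rightarrow> 'a) \<Rightarrow> (int \<Rightarrow> 'a \<Rightarrow> 'a) \<Rightarrow> bool" where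
  "filtered_homotopy s C d F C' d' F' h f g \<longleftrightarrow>
     (\<forall>n. lin_on s (C n) (h n)) \<and>
     (\<forall>p n. h n ` F p n \<subseteq> F' p (n - 1)) \<and>
     (\<forall>n. \<forall>x\<in>C n. h (n + 1) (d n x) + d' (n - 1) (h n x) = f n x - g n x)"

text \<open>E_1 page.  E_1^{q,n-q}(A) = H^n(Gr^q A) = Z1 q n / B1 q n, elements are cosets.\<close>
definition Z1 :: "(int \<Rightarrow> 'a::ab_group_add \<Rightarrow> 'a) \<Rightarrow> (int \<Rightarrow> int \<Rightarrow> 'a set) \<Rightarrow> int \<Rightarrow> int \<Rightarrow> 'a set" where
  "Z1 d F q n = {x \<in> F q n. d n x \<in> F (q + 1) (n + 1)}"

definition B1 :: "(int \<Rightarrow> 'a::ab_group_add \<Rightarrow> 'a) \<Rightarrow> (int \<Rightarrow> int \<Rightarrow> 'a set) \<Rightarrow> int \<Rightarrow> int \<Rightarrow> 'a set" where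
  "B1 d F q n = {y + d (n - 1) z | y z. y \<in> F (q + 1) n \<and> z \<in> F q (n - 1)}"

definition coset :: "'a set \<Rightarrow> 'a::ab_group_add \<Rightarrow> 'a set" where
  "coset B x = {x + b | b. b \<in> B}"

text \<open>E1 d F q (n - q) is the set of cosets forming E_1^{q,n-q}.\<close>
definition E1 :: "(int \<Rightarrow> 'a::ab_group_add \<Rightarrow> 'a) \<Rightarrow> (int \<Rightarrow> int \<Rightarrow> 'a set) \<Rightarrow> int \<Rightarrow> int \<Rightarrow> 'a set set" where
  "E1 d F q r = coset (B1 d F q (q + r)) ` Z1 d F q (q + r)"

text \<open>Direct sum of E_1^{q,n-q} over q >= p: finitely supported families of cosets
  (components with q < p are fixed to the zero coset).\<close>
definition E1_sum :: "(int \<Rightarrow> 'a::ab_group_add \<Rightarrow> 'a) \<Rightarrow> (int \<Rightarrow> int \<Rightarrow> 'a set) \<Rightarrow> int \<Rightarrow> int \<Rightarrow> (int \<Rightarrow> 'a set) set" where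
  "E1_sum d F p n = {\<phi>. (\<forall>q. p \<le> q \<longrightarrow> \<phi> q \<in> E1 d F q (n - q)) \<and>
                        (\<forall>q. q < p \<longrightarrow> \<phi> q = B1 d F q n) \<and>
                        finite {q. \<phi> q \<noteq> B1 d F q n}}"

definition E1_add :: "(int \<Rightarrow> 'a::ab_group_add set) \<Rightarrow> (int \<Rightarrow> 'a set) \<Rightarrow> int \<Rightarrow> 'a set" where
  "E1_add \<phi> \<psi> q = {a + b | a b. a \<in> \<phi> q \<and> b \<in> \<psi> q}"

definition E1_scale :: "('k::field \<Rightarrow> 'a::ab_group_add \<Rightarrow> 'a) \<Rightarrow> (int \<Rightarrow> 'a \<Rightarrow> 'a) \<Rightarrow> (int \<Rightarrow> int \<Rightarrow> 'a set)
     \<Rightarrow> int \<Rightarrow> 'k \<Rightarrow> (int \<Rightarrow> 'a set) \<Rightarrow> int \<Rightarrow> 'a set" where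
  "E1_scale s d F n c \<phi> q = {s c a + b | a b. a \<in> \<phi> q \<and> b \<in> B1 d F q n}"

definition iso_E1_sum :: "('k::field \<Rightarrow> 'a::ab_group_add \<Rightarrow> 'a) \<Rightarrow> 'a set
     \<Rightarrow> (int \<Rightarrow> 'a \<Rightarrow> 'a) \<Rightarrow> (int \<Rightarrow> int \<Rightarrow> 'a set) \<Rightarrow> int \<Rightarrow> int \<Rightarrow> bool" where
  "iso_E1_sum s V d F p n \<longleftrightarrow>
     (\<exists>\<Phi>. bij_betw \<Phi> V (E1_sum d F p n) \<and>
          (\<forall>x\<in>V. \<forall>y\<in>V. \<Phi> (x + y) = E1_add (\<Phi> x) (\<Phi> y)) \<and>
          (\<forall>c. \<forall>x\<in>V. \<Phi> (s c x) = E1_scale s d F n c (\<Phi> x)))"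

end

theory Submission
  imports Defs
begin


definition gcomp :: "(int \<Rightarrow> 'b::ab_group_add set) \<Rightarrow> 'b \<Rightarrow> int \<Rightarrow> 'b" where
  "gcomp W v = (SOME \<phi>. (\<forall>q. \<phi> q \<in> W q) \<and> finite {q. \<phi> q \<noteq> 0} \<and> v = sum \<phi> {q. \<phi> q \<noteq> 0})"

context vector_space
begin

lemma subsp_iff: "subsp scale S = subspace S"
  by (simp add: subsp_def subspace_def)

lemma span_disjoint_inter:
  assumes B: "independent B" and S1: "S1 \<subseteq> B" and S2: "S2 \<subseteq> B" and dj: "S1 \<inter> S2 = {}"
    and x1: "x \<in> span S1" and x2: "x \<in> span S2"
  shows "x = 0"
proof -
  have r1: "representation B x = representation S1 x"
    using representation_extend[OF B x1 S1] .
  have r2: "representation B x = representation S2 x"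
    using representation_extend[OF B x2 S2] .
  have z: "representation B x b = 0" for b
  proof (rule ccontr)
    assume "representation B x b \<noteq> 0"
    then have "b \<in> S1" "b \<in> S2" using r1 r2 representation_ne_zero by metis+
    with dj show False by auto
  qed
  have xB: "x \<in> span B" using span_mono[OF S1] x1 by auto
  have "x = (\<Sum>b | representation B x b \<noteq> 0. representation B x b *s b)"
    using sum_nonzero_representation_eq[OF B xB] by simp
  also have "\<dots> = 0" using z by simp
  finally show ?thesis .
qed

lemma complement_exists:
  assumes U: "subspace U" and V: "subspace V" and UV: "U \<subseteq> V"
  shows "\<exists>W. subspace W \<and> W \<subseteq> V \<and> (\<forall>x. x \<in> W \<and> x \<in> U \<longrightarrow> x = 0) \<and>
             (\<forall>v\<in>V. \<exists>w\<in>W. \<exists>u\<in>U. v = w + u)"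
proof -
  obtain BU where BU: "BU \<subseteq> U" "independent BU" "U \<subseteq> span BU"
    by (rule maximal_independent_subset)
  obtain B where B: "BU \<subseteq> B" "B \<subseteq> V" "independent B" "V \<subseteq> span B"
    using maximal_independent_subset_extend[of BU V] BU UV by blast
  have spanU: "span BU = U" using BU U span_subspace by blast
  define W where "W = span (B - BU)"
  have "subspace W" unfolding W_def by simp
  moreover have "W \<subseteq> V" unfolding W_def using B V span_minimal by blast
  moreover have "\<forall>x. x \<in> W \<and> x \<in> U \<longrightarrow> x = 0"
    using span_disjoint_inter[OF B(3), of "B - BU" BU] B spanU unfolding W_def by blast
  moreover have "\<forall>v\<in>V. \<exists>w\<in>W. \<exists>u\<in>U. v = w + u"
  proof
    fix v assume "v \<in> V"
    then have "v \<in> span ((B - BU) \<union> BU)" using B by (metis Un_Diff_cancel2 sup.absorb1 subsetD)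
    then obtain w u where "w \<in> span (B - BU)" "u \<in> span BU" "v = w + u"
      unfolding span_Un by blast
    then show "\<exists>w\<in>W. \<exists>u\<in>U. v = w + u" unfolding W_def spanU by blast
  qed
  ultimately show ?thesis by blast
qed

end


locale graded = vector_space s for s :: "'k::field \<Rightarrow> 'a::ab_group_add \<Rightarrow> 'a" +
  fixes G :: "int \<Rightarrow> 'a set" and W :: "int \<Rightarrow> 'a set" and P :: int
  assumes G_sub: "\<And>q. subspace (G q)"
    and G_dec: "\<And>q. G (q + 1) \<subseteq> G q"
    and G_P: "G P = {0}"
    and W_sub: "\<And>q. subspace (W q)"
    and W_G: "\<And>q. W q \<subseteq> G q"
    and W_span: "\<And>q a. a \<in> G q \<Longrightarrow> \<exists>w\<in>W q. \<exists>y\<in>G (q + 1). a = w + y"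
    and W_ind: "\<And>q x. x \<in> W q \<Longrightarrow> x \<in> G (q + 1) \<Longrightarrow> x = 0"
begin

lemma sum_supp:
  fixes f :: "int \<Rightarrow> 'a"
  assumes "finite T" "{q. f q \<noteq> 0} \<subseteq> T"
  shows "sum f {q. f q \<noteq> 0} = sum f T"
  by (rule sum.mono_neutral_left) (use assms in \<open>auto intro: finite_subset\<close>)

lemma G_mono: assumes "p \<le> q" shows "G q \<subseteq> G p"
proof -
  have "\<forall>q. q - p = int k \<longrightarrow> G q \<subseteq> G p" for k
  proof (induction k)
    case 0 then show ?case by simp
  next
    case (Suc k)
    show ?case
    proof (intro allI impI)
      fix q assume "q - p = int (Suc k)"
      then have "(q - 1) - p = int k" by simp
      then have "G (q - 1) \<subseteq> G p" using Suc by blast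
      moreover have "G q \<subseteq> G (q - 1)" using G_dec[of "q - 1"] by simp
      ultimately show "G q \<subseteq> G p" by blast
    qed
  qed
  moreover obtain k where "q = p + int k" using assms zle_iff_zadd by blast
  ultimately show ?thesis by simp
qed

lemma G_zero: "P \<le> q \<Longrightarrow> G q = {0}"
  using G_mono[of P q] G_P subspace_0[OF G_sub[of q]] by auto

lemma g_exist:
  assumes "v \<in> G p"
  shows "\<exists>\<phi>. (\<forall>q. \<phi> q \<in> W q) \<and> (\<forall>q. \<phi> q \<noteq> 0 \<longrightarrow> p \<le> q \<and> q < P) \<and> v = sum \<phi> {p..<P}"
proof -
  have "\<forall>p v. P - p \<le> int k \<longrightarrow> v \<in> G p \<longrightarrow>
      (\<exists>\<phi>. (\<forall>q. \<phi> q \<in> W q) \<and> (\<forall>q. \<phi> q \<noteq> 0 \<longrightarrow> p \<le> q \<and> q < P) \<and> v = sum \<phi> {p..<P})" for k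
  proof (induction k)
    case 0
    show ?case
    proof (intro allI impI)
      fix p v assume "P - p \<le> int 0" "v \<in> G p"
      then have "v = 0" using G_zero[of p] by auto
      then show "\<exists>\<phi>. (\<forall>q. \<phi> q \<in> W q) \<and> (\<forall>q. \<phi> q \<noteq> 0 \<longrightarrow> p \<le> q \<and> q < P) \<and> v = sum \<phi> {p..<P}"
        by (intro exI[of _ "\<lambda>q. 0"]) (auto simp: subspace_0[OF W_sub])
    qed
  next
    case (Suc k)
    show ?case
    proof (intro allI impI)
      fix p v assume a: "P - p \<le> int (Suc k)" "v \<in> G p"
      show "\<exists>\<phi>. (\<forall>q. \<phi> q \<in> W q) \<and> (\<forall>q. \<phi> q \<noteq> 0 \<longrightarrow> p \<le> q \<and> q < P) \<and> v = sum \<phi> {p..<P}"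
      proof (cases "P \<le> p")
        case True
        then have "v = 0" using G_zero[of p] a by auto
        then show ?thesis
          by (intro exI[of _ "\<lambda>q. 0"]) (auto simp: subspace_0[OF W_sub])
      next
        case False
        obtain w y where wy: "w \<in> W p" "y \<in> G (p + 1)" "v = w + y" using W_span[OF a(2)] by blast
        have "P - (p + 1) \<le> int k" using a by simp
        then obtain \<phi> where \<phi>: "\<forall>q. \<phi> q \<in> W q" "\<forall>q. \<phi> q \<noteq> 0 \<longrightarrow> p + 1 \<le> q \<and> q < P"
            "y = sum \<phi> {p + 1..<P}"
          using Suc wy by blast
        define \<psi> where "\<psi> = \<phi>(p := w)"
        have "{p..<P} = insert p {p + 1..<P}" using False by auto
        then have "sum \<psi> {p..<P} = w + sum \<psi> {p + 1..<P}" by (simp add: \<psi>_def)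
        also have "sum \<psi> {p + 1..<P} = sum \<phi> {p + 1..<P}"
          by (rule sum.cong) (auto simp: \<psi>_def)
        finally have "v = sum \<psi> {p..<P}" using wy \<phi> by simp
        moreover have "\<forall>q. \<psi> q \<in> W q" using \<phi> wy by (simp add: \<psi>_def)
        moreover have "\<forall>q. \<psi> q \<noteq> 0 \<longrightarrow> p \<le> q \<and> q < P" using \<phi> False by (auto simp: \<psi>_def)
        ultimately show ?thesis by blast
      qed
    qed
  qed
  moreover have "P - p \<le> int (nat (P - p))" by simp
  ultimately show ?thesis using assms by blast
qed

lemma sum_in_G:
  assumes "\<And>q. q \<in> S \<Longrightarrow> \<phi> q \<in> W q" "\<And>q. q \<in> S \<Longrightarrow> p \<le> q"
  shows "sum \<phi> S \<in> G p"
  by (rule subspace_sum[OF G_sub]) (use assms W_G G_mono in blast)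

lemma g_uniq0:
  assumes W: "\<And>q. \<chi> q \<in> W q" and S: "finite S" and z: "sum \<chi> S = 0"
  shows "q \<in> S \<Longrightarrow> \<chi> q = 0"
proof (rule ccontr)
  assume q: "q \<in> S" "\<chi> q \<noteq> 0"
  define T where "T = {q\<in>S. \<chi> q \<noteq> 0}"
  have T: "finite T" "T \<noteq> {}" using S q by (auto simp: T_def)
  define q0 where "q0 = Min T"
  have q0T: "q0 \<in> T" using T by (simp add: q0_def)
  have q0le: "\<And>r. r \<in> T \<Longrightarrow> q0 \<le> r" using T by (simp add: q0_def)
  have "sum \<chi> S = sum \<chi> T" by (rule sum.mono_neutral_right) (auto simp: T_def S)
  also have "\<dots> = \<chi> q0 + sum \<chi> (T - {q0})" using T q0T by (simp add: sum.remove)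
  finally have e: "\<chi> q0 = - sum \<chi> (T - {q0})" using z by (simp add: eq_neg_iff_add_eq_0)
  have "sum \<chi> (T - {q0}) \<in> G (q0 + 1)"
  proof (rule sum_in_G)
    fix r assume "r \<in> T - {q0}"
    then show "q0 + 1 \<le> r" using q0le by force
  qed (rule W)
  then have "\<chi> q0 \<in> G (q0 + 1)" using e subspace_neg[OF G_sub] by simp
  then have "\<chi> q0 = 0" using W_ind W by blast
  then show False using q0T by (simp add: T_def)
qed

lemma gcomp_ex:
  assumes "v \<in> G p"
  shows "(\<forall>q. gcomp W v q \<in> W q) \<and> finite {q. gcomp W v q \<noteq> 0} \<and>
         v = sum (gcomp W v) {q. gcomp W v q \<noteq> 0}"
proof -
  obtain \<phi> where \<phi>: "\<forall>q. \<phi> q \<in> W q" "\<forall>q. \<phi> q \<noteq> 0 \<longrightarrow> p \<le> q \<and> q < P" "v = sum \<phi> {p..<P}"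
    using g_exist[OF assms] by blast
  have f: "finite {q. \<phi> q \<noteq> 0}" by (rule finite_subset[of _ "{p..<P}"]) (use \<phi> in auto)
  have "sum \<phi> {p..<P} = sum \<phi> {q. \<phi> q \<noteq> 0}"
    by (rule sum.mono_neutral_right) (use \<phi> in auto)
  then have "\<exists>\<phi>. (\<forall>q. \<phi> q \<in> W q) \<and> finite {q. \<phi> q \<noteq> 0} \<and> v = sum \<phi> {q. \<phi> q \<noteq> 0}"
    using \<phi> f by auto
  then show ?thesis unfolding gcomp_def by (rule someI_ex)
qed

lemma sum_in_some_G:
  assumes "\<And>q. \<phi> q \<in> W q" "finite S"
  shows "\<exists>p. sum \<phi> S \<in> G p"
proof -
  have "\<forall>q\<in>S. Min (insert 0 S) \<le> q" using assms by simp
  then show ?thesis using sum_in_G[of S \<phi> "Min (insert 0 S)"] assms by blast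
qed

lemma gcomp_unique:
  assumes W: "\<And>q. \<phi> q \<in> W q" and S: "finite S" and sup: "\<And>q. \<phi> q \<noteq> 0 \<Longrightarrow> q \<in> S"
    and v: "v = sum \<phi> S"
  shows "gcomp W v = \<phi>"
proof -
  obtain p where p: "v \<in> G p" using sum_in_some_G[OF W S] v by blast
  note ex = gcomp_ex[OF p]
  define U where "U = S \<union> {q. gcomp W v q \<noteq> 0}"
  have U: "finite U" using S ex by (simp add: U_def)
  define \<chi> where "\<chi> q = gcomp W v q - \<phi> q" for q
  have \<chi>W: "\<chi> q \<in> W q" for q using ex W subspace_diff[OF W_sub] by (simp add: \<chi>_def)
  have "sum (gcomp W v) U = v"
    using ex sum_supp[OF U, of "gcomp W v"] by (auto simp: U_def)
  moreover have "sum \<phi> U = v"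
  proof -
    have a1: "{q. \<phi> q \<noteq> 0} \<subseteq> U" using sup by (auto simp: U_def)
    have a2: "{q. \<phi> q \<noteq> 0} \<subseteq> S" using sup by auto
    show ?thesis using sum_supp[OF U a1] sum_supp[OF S a2] v by simp
  qed
  ultimately have "sum \<chi> U = 0" by (simp add: \<chi>_def sum_subtractf)
  then have "\<And>q. q \<in> U \<Longrightarrow> \<chi> q = 0" using g_uniq0[OF \<chi>W U] by blast
  then have z: "\<And>q. q \<in> U \<Longrightarrow> gcomp W v q = \<phi> q" by (simp add: \<chi>_def)
  show ?thesis
  proof
    fix q show "gcomp W v q = \<phi> q"
    proof (cases "q \<in> U")
      case True then show ?thesis using z by blast
    next
      case False then have "q \<notin> S" "gcomp W v q = 0" by (auto simp: U_def)
      then show ?thesis using sup by metis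
    qed
  qed
qed

lemma gcomp_low:
  assumes "v \<in> G p" "q < p"
  shows "gcomp W v q = 0"
proof -
  obtain \<phi> where \<phi>: "\<forall>q. \<phi> q \<in> W q" "\<forall>q. \<phi> q \<noteq> 0 \<longrightarrow> p \<le> q \<and> q < P" "v = sum \<phi> {p..<P}"
    using g_exist[OF assms(1)] by blast
  have "gcomp W v = \<phi>" by (rule gcomp_unique) (use \<phi> in auto)
  then show ?thesis using \<phi> assms by force
qed

lemma gcomp_in_G:
  assumes "v \<in> G r" "\<And>q. q < p \<Longrightarrow> gcomp W v q = 0"
  shows "v \<in> G p"
proof -
  note ex = gcomp_ex[OF assms(1)]
  have "sum (gcomp W v) {q. gcomp W v q \<noteq> 0} \<in> G p"
    by (rule sum_in_G) (use ex assms(2) in \<open>auto simp: not_less[symmetric]\<close>)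
  then show ?thesis using ex by simp
qed

lemma gcomp_add:
  assumes "v \<in> G p" "w \<in> G r"
  shows "gcomp W (v + w) = (\<lambda>q. gcomp W v q + gcomp W w q)"
proof -
  note e1 = gcomp_ex[OF assms(1)] and e2 = gcomp_ex[OF assms(2)]
  define S where "S = {q. gcomp W v q \<noteq> 0} \<union> {q. gcomp W w q \<noteq> 0}"
  have S: "finite S" using e1 e2 by (simp add: S_def)
  have "v = sum (gcomp W v) S" using e1
    using sum_supp[OF S, of "gcomp W v"] by (auto simp: S_def)
  moreover have "w = sum (gcomp W w) S" using e2
    using sum_supp[OF S, of "gcomp W w"] by (auto simp: S_def)
  ultimately have "v + w = sum (\<lambda>q. gcomp W v q + gcomp W w q) S" by (simp add: sum.distrib)
  then show ?thesis
    by (intro gcomp_unique) (use e1 e2 S subspace_add[OF W_sub] in \<open>auto simp: S_def\<close>)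
qed

lemma gcomp_scale:
  assumes "v \<in> G p"
  shows "gcomp W (s c v) = (\<lambda>q. s c (gcomp W v q))"
proof -
  note e1 = gcomp_ex[OF assms(1)]
  define S where "S = {q. gcomp W v q \<noteq> 0}"
  have eq: "v = sum (gcomp W v) S" using e1 by (simp add: S_def)
  have "s c v = s c (sum (gcomp W v) S)" using eq by (rule arg_cong)
  also have "\<dots> = sum (\<lambda>q. s c (gcomp W v q)) S" by (rule scale_sum_right)
  finally have "s c v = sum (\<lambda>q. s c (gcomp W v q)) S" .
  then show ?thesis
    by (intro gcomp_unique) (use e1 subspace_scale[OF W_sub] in \<open>auto simp: S_def\<close>)
qed

lemma gcomp_zero: "gcomp W 0 = (\<lambda>q. 0)"
  by (rule gcomp_unique[of _ "{}"]) (auto simp: subspace_0[OF W_sub])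

lemma gcomp_sum_eq:
  assumes "v \<in> G p" "finite S" "\<And>q. gcomp W v q \<noteq> 0 \<Longrightarrow> q \<in> S"
  shows "v = sum (gcomp W v) S"
proof -
  note e1 = gcomp_ex[OF assms(1)]
  show ?thesis using e1 assms(2,3)
    using sum_supp[OF assms(2), of "gcomp W v"] by auto
qed

lemma gcomp_all_zero:
  assumes "v \<in> G p" "\<And>q. gcomp W v q = 0"
  shows "v = 0"
  using gcomp_ex[OF assms(1)] assms(2) by simp

end


locale fcx = vector_space s for s :: "'k::field \<Rightarrow> 'a::ab_group_add \<Rightarrow> 'a" +
  fixes A :: "int \<Rightarrow> 'a set" and d :: "int \<Rightarrow> 'a \<Rightarrow> 'a" and F :: "int \<Rightarrow> int \<Rightarrow> 'a set"
  assumes fc: "filtered_complex s A d F"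
begin

lemma fcp: "cochain_complex s A d" "\<And>p n. subsp s (F p n)" "\<And>p n. F p n \<subseteq> A n"
    "\<And>p n. F (p + 1) n \<subseteq> F p n" "\<And>p n. d n ` F p n \<subseteq> F p (n + 1)"
    "\<And>n. (\<Union>p. F p n) = A n" "\<And>n. \<exists>p. F p n = {0}"
  using fc unfolding filtered_complex_def by simp_all
lemma ccp: "\<And>n. subsp s (A n)" "\<And>n. lin_on s (A n) (d n)" "\<And>n. d n ` A n \<subseteq> A (n + 1)"
  "\<And>n x. x \<in> A n \<Longrightarrow> d (n + 1) (d n x) = 0"
  using fcp(1) unfolding cochain_complex_def by simp_all

lemma A_sub: "subspace (A n)"
  using ccp(1) by (simp add: subsp_iff)
lemma F_sub: "subspace (F p n)"
  using fcp(2) by (simp add: subsp_iff)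
lemma F_A: "x \<in> F p n \<Longrightarrow> x \<in> A n"
  using fcp(3) by blast
lemma F_dec: "F (p + 1) n \<subseteq> F p n"
  by (rule fcp(4))
lemma d_add: "x \<in> A n \<Longrightarrow> y \<in> A n \<Longrightarrow> d n (x + y) = d n x + d n y"
  using ccp(2)[of n] unfolding lin_on_def by blast
lemma d_scale: "x \<in> A n \<Longrightarrow> d n (s c x) = s c (d n x)"
  using ccp(2)[of n] unfolding lin_on_def by blast
lemma d_A: "x \<in> A n \<Longrightarrow> d n x \<in> A (n + 1)"
  using ccp(3)[of n] by blast
lemma dd: "x \<in> A n \<Longrightarrow> d (n + 1) (d n x) = 0"
  by (rule ccp(4))
lemma d_F: "x \<in> F p n \<Longrightarrow> d n x \<in> F p (n + 1)"
  using fcp(5)[of n p] by blast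
lemma exh: "x \<in> A n \<Longrightarrow> \<exists>p. x \<in> F p n"
  using fcp(6)[of n] by blast
lemma bnd: "\<exists>P. F P n = {0}"
  by (rule fcp(7))

lemma F_mono: assumes "p \<le> q" shows "F q n \<subseteq> F p n"
proof -
  have "\<forall>q. q - p = int k \<longrightarrow> F q n \<subseteq> F p n" for k
  proof (induction k)
    case 0 then show ?case by simp
  next
    case (Suc k)
    show ?case
    proof (intro allI impI)
      fix q assume "q - p = int (Suc k)"
      then have "(q - 1) - p = int k" by simp
      then have "F (q - 1) n \<subseteq> F p n" using Suc by blast
      moreover have "F q n \<subseteq> F (q - 1) n" using F_dec[of "q - 1"] by simp
      ultimately show "F q n \<subseteq> F p n" by blast
    qed
  qed
  moreover obtain k where "q = p + int k" using assms zle_iff_zadd by blast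
  ultimately show ?thesis by simp
qed

lemma A0: "0 \<in> A n" using subspace_0[OF A_sub] .
lemma F0: "0 \<in> F p n" using subspace_0[OF F_sub] .
lemma d_zero: "d n 0 = 0"
  using d_add[OF A0 A0, of n] by simp
lemma d_neg: "x \<in> A n \<Longrightarrow> d n (- x) = - d n x"
  using d_add[of x n "- x"] subspace_neg[OF A_sub] d_zero by (simp add: eq_neg_iff_add_eq_0 add.commute)
lemma d_diff: "x \<in> A n \<Longrightarrow> y \<in> A n \<Longrightarrow> d n (x - y) = d n x - d n y"
  using d_add[of x n "- y"] d_neg[of y n] subspace_neg[OF A_sub] by simp
lemma d_sum: "(\<And>i. i \<in> S \<Longrightarrow> x i \<in> A n) \<Longrightarrow> d n (sum x S) = (\<Sum>i\<in>S. d n (x i))"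
proof (induction S rule: infinite_finite_induct)
  case (infinite S) then show ?case by (simp add: d_zero)
next
  case empty then show ?case by (simp add: d_zero)
next
  case (insert i S)
  have "sum x S \<in> A n" by (rule subspace_sum[OF A_sub]) (use insert in auto)
  then show ?case using insert by (simp add: d_add)
qed

lemma d_A': "x \<in> A (n - 1) \<Longrightarrow> d (n - 1) x \<in> A n"
  using d_A[of x "n - 1"] by simp
lemma dd': "x \<in> A (n - 1) \<Longrightarrow> d n (d (n - 1) x) = 0"
  using dd[of x "n - 1"] by simp
lemma d_F': "x \<in> F p (n - 1) \<Longrightarrow> d (n - 1) x \<in> F p n"
  using d_F[of x p "n - 1"] by simp

subsection \<open>Level pieces\<close>

definition cmpl_prop :: "'a set \<Rightarrow> 'a set \<Rightarrow> 'a set \<Rightarrow> bool" where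
  "cmpl_prop W U V \<longleftrightarrow> subspace W \<and> W \<subseteq> V \<and> (\<forall>x. x \<in> W \<and> x \<in> U \<longrightarrow> x = 0) \<and>
             (\<forall>v\<in>V. \<exists>w\<in>W. \<exists>u\<in>U. v = w + u)"

lemma cmpl_ex: "subspace U \<Longrightarrow> subspace V \<Longrightarrow> U \<subseteq> V \<Longrightarrow> cmpl_prop (SOME W. cmpl_prop W U V) U V"
  using complement_exists[of U V] unfolding cmpl_prop_def[symmetric] by (rule someI_ex)

lemma Z1_sub: "subspace (Z1 d F q n)"
proof (rule subspaceI)
  show "0 \<in> Z1 d F q n" by (simp add: Z1_def F0 d_zero)
next
  fix x y assume "x \<in> Z1 d F q n" "y \<in> Z1 d F q n"
  then show "x + y \<in> Z1 d F q n"
    by (auto simp: Z1_def d_add F_A subspace_add[OF F_sub])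
next
  fix c x assume "x \<in> Z1 d F q n"
  then show "s c x \<in> Z1 d F q n"
    by (auto simp: Z1_def d_scale F_A subspace_scale[OF F_sub])
qed

lemma Z1_F: "Z1 d F q n \<subseteq> F q n" by (auto simp: Z1_def)
lemma F1_Z1: "F (q + 1) n \<subseteq> Z1 d F q n"
  using F_dec d_F by (auto simp: Z1_def)

lemma B1_sub: "subspace (B1 d F q n)"
proof (rule subspaceI)
  show "0 \<in> B1 d F q n" unfolding B1_def using F0 d_zero by force
next
  fix x y assume "x \<in> B1 d F q n" "y \<in> B1 d F q n"
  then obtain y1 z1 y2 z2 where "x = y1 + d (n - 1) z1" "y = y2 + d (n - 1) z2"
    "y1 \<in> F (q + 1) n" "z1 \<in> F q (n - 1)" "y2 \<in> F (q + 1) n" "z2 \<in> F q (n - 1)"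
    by (auto simp: B1_def)
  moreover have "x + y = (y1 + y2) + d (n - 1) (z1 + z2)"
    using calculation by (simp add: d_add F_A algebra_simps)
  ultimately show "x + y \<in> B1 d F q n" unfolding B1_def
    using subspace_add[OF F_sub] by blast
next
  fix c x assume "x \<in> B1 d F q n"
  then obtain y1 z1 where "x = y1 + d (n - 1) z1"
    "y1 \<in> F (q + 1) n" "z1 \<in> F q (n - 1)"
    by (auto simp: B1_def)
  moreover have "s c x = s c y1 + d (n - 1) (s c z1)"
    using calculation by (simp add: d_scale F_A scale_right_distrib)
  ultimately show "s c x \<in> B1 d F q n" unfolding B1_def
    using subspace_scale[OF F_sub] by blast
qed

lemma B1_Z1: "B1 d F q n \<subseteq> Z1 d F q n"
proof
  fix b assume "b \<in> B1 d F q n"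
  then obtain y z where b: "b = y + d (n - 1) z" "y \<in> F (q + 1) n" "z \<in> F q (n - 1)"
    by (auto simp: B1_def)
  have "y \<in> F q n" using b F_dec by blast
  moreover have "d (n - 1) z \<in> F q n" using d_F' b by blast
  ultimately have "b \<in> F q n" using b subspace_add[OF F_sub] by simp
  moreover have "d n b = d n y"
    using b dd'[of z n] d_add[of y n "d (n - 1) z"] F_A d_A' by simp
  moreover have "d n y \<in> F (q + 1) (n + 1)" using d_F b by blast
  ultimately show "b \<in> Z1 d F q n" by (simp add: Z1_def)
qed

definition Cl :: "int \<Rightarrow> int \<Rightarrow> 'a set" where
  "Cl q n = (SOME W. cmpl_prop W (Z1 d F q n) (F q n))"
definition Hl :: "int \<Rightarrow> int \<Rightarrow> 'a set" where
  "Hl q n = (SOME W. cmpl_prop W (B1 d F q n) (Z1 d F q n))"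
definition Dl :: "int \<Rightarrow> int \<Rightarrow> 'a set" where
  "Dl q n = d (n - 1) ` Cl q (n - 1)"
definition Wl :: "int \<Rightarrow> int \<Rightarrow> 'a set" where
  "Wl q n = {c + h + e | c h e. c \<in> Cl q n \<and> h \<in> Hl q n \<and> e \<in> Dl q n}"

lemma Cl_c: "cmpl_prop (Cl q n) (Z1 d F q n) (F q n)"
  unfolding Cl_def by (rule cmpl_ex[OF Z1_sub F_sub Z1_F])
lemma Hl_c: "cmpl_prop (Hl q n) (B1 d F q n) (Z1 d F q n)"
  unfolding Hl_def by (rule cmpl_ex[OF B1_sub Z1_sub B1_Z1])

lemma Cl_sub: "subspace (Cl q n)" using Cl_c by (simp add: cmpl_prop_def)
lemma Cl_F: "Cl q n \<subseteq> F q n" using Cl_c by (simp add: cmpl_prop_def)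
lemma Cl_Z: "x \<in> Cl q n \<Longrightarrow> x \<in> Z1 d F q n \<Longrightarrow> x = 0" using Cl_c by (simp add: cmpl_prop_def)
lemma F_split: "a \<in> F q n \<Longrightarrow> \<exists>w\<in>Cl q n. \<exists>u\<in>Z1 d F q n. a = w + u"
  using Cl_c by (simp add: cmpl_prop_def)
lemma Hl_sub: "subspace (Hl q n)" using Hl_c by (simp add: cmpl_prop_def)
lemma Hl_Z: "Hl q n \<subseteq> Z1 d F q n" using Hl_c by (simp add: cmpl_prop_def)
lemma Hl_B: "x \<in> Hl q n \<Longrightarrow> x \<in> B1 d F q n \<Longrightarrow> x = 0" using Hl_c by (simp add: cmpl_prop_def)
lemma Z_split: "a \<in> Z1 d F q n \<Longrightarrow> \<exists>w\<in>Hl q n. \<exists>u\<in>B1 d F q n. a = w + u"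
  using Hl_c by (simp add: cmpl_prop_def)

lemma Cl_A: "x \<in> Cl q n \<Longrightarrow> x \<in> A n" using Cl_F F_A by blast
lemma Hl_F: "Hl q n \<subseteq> F q n" using Hl_Z Z1_F by blast

lemma LC: "c \<in> Cl q n \<Longrightarrow> d n c \<in> F (q + 1) (n + 1) \<Longrightarrow> c = 0"
proof -
  assume a: "c \<in> Cl q n" "d n c \<in> F (q + 1) (n + 1)"
  then have "c \<in> Z1 d F q n" using Cl_F unfolding Z1_def by blast
  then show "c = 0" using Cl_Z a by blast
qed

lemma Dl_sub: "subspace (Dl q n)"
proof (rule subspaceI)
  show "0 \<in> Dl q n" unfolding Dl_def using subspace_0[OF Cl_sub] d_zero by force
next
  fix x y assume "x \<in> Dl q n" "y \<in> Dl q n"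
  then obtain c1 c2 where "c1 \<in> Cl q (n - 1)" "c2 \<in> Cl q (n - 1)" "x = d (n - 1) c1" "y = d (n - 1) c2"
    by (auto simp: Dl_def)
  then show "x + y \<in> Dl q n" unfolding Dl_def
    using d_add[of c1 "n - 1" c2] Cl_A subspace_add[OF Cl_sub] by (metis image_eqI)
next
  fix c x assume "x \<in> Dl q n"
  then obtain c1 where "c1 \<in> Cl q (n - 1)" "x = d (n - 1) c1"
    by (auto simp: Dl_def)
  then show "s c x \<in> Dl q n" unfolding Dl_def
    using d_scale[of c1 "n - 1" c] Cl_A subspace_scale[OF Cl_sub] by (metis image_eqI)
qed

lemma Dl_B: "Dl q n \<subseteq> B1 d F q n"
proof
  fix e assume "e \<in> Dl q n"
  then obtain c where "c \<in> Cl q (n - 1)" "e = d (n - 1) c" by (auto simp: Dl_def)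
  then have "e = 0 + d (n - 1) c" "c \<in> F q (n - 1)" using Cl_F by auto
  then show "e \<in> B1 d F q n" unfolding B1_def using F0 by blast
qed
lemma Dl_F: "Dl q n \<subseteq> F q n" using Dl_B B1_Z1 Z1_F by blast
lemma Dl_A: "x \<in> Dl q n \<Longrightarrow> x \<in> A n" using Dl_F F_A by blast

lemma B1_split: "b \<in> B1 d F q n \<Longrightarrow> \<exists>y\<in>F (q + 1) n. \<exists>e\<in>Dl q n. b = y + e"
proof -
  assume "b \<in> B1 d F q n"
  then obtain y z where b: "b = y + d (n - 1) z" "y \<in> F (q + 1) n" "z \<in> F q (n - 1)"
    by (auto simp: B1_def)
  obtain w u where wu: "w \<in> Cl q (n - 1)" "u \<in> Z1 d F q (n - 1)" "z = w + u"
    using F_split[OF b(3)] by blast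
  have "d (n - 1) z = d (n - 1) w + d (n - 1) u"
    using wu d_add Cl_A Z1_F F_A by (metis subsetD)
  moreover have "d (n - 1) u \<in> F (q + 1) n" using wu(2) by (auto simp: Z1_def)
  ultimately have "b = (y + d (n - 1) u) + d (n - 1) w" using b by (simp add: algebra_simps)
  moreover have "y + d (n - 1) u \<in> F (q + 1) n"
    using b(2) \<open>d (n - 1) u \<in> F (q + 1) n\<close> subspace_add[OF F_sub] by blast
  moreover have "d (n - 1) w \<in> Dl q n" using wu by (simp add: Dl_def)
  ultimately show ?thesis by blast
qed

lemma L1: "a \<in> F q n \<Longrightarrow> \<exists>w\<in>Wl q n. \<exists>y\<in>F (q + 1) n. a = w + y"
proof -
  assume "a \<in> F q n"
  then obtain c z where cz: "c \<in> Cl q n" "z \<in> Z1 d F q n" "a = c + z" using F_split by blast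
  obtain h b where hb: "h \<in> Hl q n" "b \<in> B1 d F q n" "z = h + b" using Z_split[OF cz(2)] by blast
  obtain y e where ye: "y \<in> F (q + 1) n" "e \<in> Dl q n" "b = y + e" using B1_split[OF hb(2)] by blast
  have "a = (c + h + e) + y" using cz hb ye by (simp add: algebra_simps)
  moreover have "c + h + e \<in> Wl q n" using cz hb ye by (auto simp: Wl_def)
  ultimately show ?thesis using ye by blast
qed

lemma L2:
  assumes c: "c \<in> Cl q n" and h: "h \<in> Hl q n" and e: "e \<in> Dl q n" and y: "y \<in> F (q + 1) n"
    and z: "c + h + e + y = 0"
  shows "c = 0 \<and> h = 0 \<and> e = 0"
proof -
  have hZ: "h \<in> Z1 d F q n" using h Hl_Z by blast
  have eZ: "e \<in> Z1 d F q n" using e Dl_B B1_Z1 by blast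
  have yZ: "y \<in> Z1 d F q n" using y F1_Z1 by blast
  have "c = - (h + e + y)" using z by (simp add: eq_neg_iff_add_eq_0 algebra_simps)
  moreover have "h + e + y \<in> Z1 d F q n" using hZ eZ yZ subspace_add[OF Z1_sub] by blast
  ultimately have "c \<in> Z1 d F q n" using subspace_neg[OF Z1_sub] by metis
  then have c0: "c = 0" using Cl_Z c by blast
  have "h = - (e + y)" using z c0 by (simp add: eq_neg_iff_add_eq_0 algebra_simps)
  moreover have "e + y \<in> B1 d F q n"
  proof -
    have "y \<in> F (q + 1) n" by fact
    moreover obtain c' where "c' \<in> Cl q (n - 1)" "e = d (n - 1) c'" using e by (auto simp: Dl_def)
    moreover have "c' \<in> F q (n - 1)" using calculation Cl_F by blast
    ultimately show ?thesis unfolding B1_def by (auto simp: add.commute)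
  qed
  ultimately have "h \<in> B1 d F q n" using subspace_neg[OF B1_sub] by metis
  then have h0: "h = 0" using Hl_B h by blast
  have "e = - y" using z c0 h0 by (simp add: eq_neg_iff_add_eq_0)
  then have "e \<in> F (q + 1) n" using y subspace_neg[OF F_sub] by metis
  moreover obtain c' where c': "c' \<in> Cl q (n - 1)" "e = d (n - 1) c'" using e by (auto simp: Dl_def)
  ultimately have "d (n - 1) c' \<in> F (q + 1) (n - 1 + 1)" by simp
  then have "c' = 0" using LC c' by blast
  then have "e = 0" using c' d_zero by simp
  then show ?thesis using c0 h0 by simp
qed

lemma Wl_sub: "subspace (Wl q n)"
proof (rule subspaceI)
  show "0 \<in> Wl q n" unfolding Wl_def
    using subspace_0[OF Cl_sub] subspace_0[OF Hl_sub] subspace_0[OF Dl_sub] by force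
next
  fix x y assume "x \<in> Wl q n" "y \<in> Wl q n"
  then obtain c1 h1 e1 c2 h2 e2 where "c1 \<in> Cl q n" "h1 \<in> Hl q n" "e1 \<in> Dl q n" "x = c1 + h1 + e1"
    "c2 \<in> Cl q n" "h2 \<in> Hl q n" "e2 \<in> Dl q n" "y = c2 + h2 + e2" by (auto simp: Wl_def)
  moreover have "x + y = (c1 + c2) + (h1 + h2) + (e1 + e2)" using calculation by (simp add: algebra_simps)
  ultimately show "x + y \<in> Wl q n" unfolding Wl_def
    using subspace_add[OF Cl_sub] subspace_add[OF Hl_sub] subspace_add[OF Dl_sub] by blast
next
  fix c x assume "x \<in> Wl q n"
  then obtain c1 h1 e1 where "c1 \<in> Cl q n" "h1 \<in> Hl q n" "e1 \<in> Dl q n" "x = c1 + h1 + e1"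
    by (auto simp: Wl_def)
  moreover have "s c x = s c c1 + s c h1 + s c e1" using calculation by (simp add: scale_right_distrib)
  ultimately show "s c x \<in> Wl q n" unfolding Wl_def
    using subspace_scale[OF Cl_sub] subspace_scale[OF Hl_sub] subspace_scale[OF Dl_sub] by blast
qed

lemma Wl_F: "Wl q n \<subseteq> F q n"
proof
  fix x assume "x \<in> Wl q n"
  then obtain c1 h1 e1 where "c1 \<in> Cl q n" "h1 \<in> Hl q n" "e1 \<in> Dl q n" "x = c1 + h1 + e1"
    by (auto simp: Wl_def)
  moreover then have "c1 \<in> F q n" "h1 \<in> F q n" "e1 \<in> F q n" using Cl_F Hl_F Dl_F by blast+
  ultimately show "x \<in> F q n" using subspace_add[OF F_sub] by simp
qed

lemma Wl_ind: "w \<in> Wl q n \<Longrightarrow> w \<in> F (q + 1) n \<Longrightarrow> w = 0"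
proof -
  assume w: "w \<in> Wl q n" "w \<in> F (q + 1) n"
  then obtain c h e where che: "c \<in> Cl q n" "h \<in> Hl q n" "e \<in> Dl q n" "w = c + h + e"
    by (auto simp: Wl_def)
  have "c + h + e + (- w) = 0" using che by simp
  then have "c = 0 \<and> h = 0 \<and> e = 0" using L2[OF che(1-3)] w subspace_neg[OF F_sub] by blast
  then show "w = 0" using che by simp
qed

lemma W_split_unique:
  assumes "c \<in> Cl q n" "h \<in> Hl q n" "e \<in> Dl q n" "c' \<in> Cl q n" "h' \<in> Hl q n" "e' \<in> Dl q n"
    "c + h + e = c' + h' + e'"
  shows "c = c' \<and> h = h' \<and> e = e'"
proof -
  have "(c - c') + (h - h') + (e - e') + 0 = 0" using assms(7) by (simp add: algebra_simps)
  then have "c - c' = 0 \<and> h - h' = 0 \<and> e - e' = 0"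
    using L2[of "c - c'" q n "h - h'" "e - e'" 0] assms F0
      subspace_diff[OF Cl_sub] subspace_diff[OF Hl_sub] subspace_diff[OF Dl_sub] by blast
  then show ?thesis by simp
qed

definition Pn :: "int \<Rightarrow> int" where "Pn n = (SOME P. F P n = {0})"
lemma Pn: "F (Pn n) n = {0}" unfolding Pn_def using bnd by (rule someI_ex)

lemma graded_inst: "graded s (\<lambda>q. F q n) (\<lambda>q. Wl q n) (Pn n)"
  unfolding graded_def graded_axioms_def
proof (intro conjI allI impI vector_space_axioms F_sub F_dec Pn Wl_sub Wl_F)
  fix q a assume "a \<in> F q n" then show "\<exists>w\<in>Wl q n. \<exists>y\<in>F (q + 1) n. a = w + y" by (rule L1)
next
  fix q x assume "x \<in> Wl q n" "x \<in> F (q + 1) n" then show "x = 0" by (rule Wl_ind)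
qed

end


context fcx
begin

definition cp :: "int \<Rightarrow> 'a \<Rightarrow> int \<Rightarrow> 'a" where "cp n = gcomp (\<lambda>q. Wl q n)"
definition Cg :: "int \<Rightarrow> 'a set" where "Cg n = {v \<in> A n. \<forall>q. cp n v q \<in> Cl q n}"
definition Hg :: "int \<Rightarrow> 'a set" where "Hg n = {v \<in> A n. \<forall>q. cp n v q \<in> Hl q n}"
definition Dg :: "int \<Rightarrow> 'a set" where "Dg n = d (n - 1) ` Cg (n - 1)"

lemma cp_ex: "v \<in> A n \<Longrightarrow> (\<forall>q. cp n v q \<in> Wl q n) \<and> finite {q. cp n v q \<noteq> 0} \<and>
    v = sum (cp n v) {q. cp n v q \<noteq> 0}"
proof -
  assume "v \<in> A n"
  then obtain p where "v \<in> F p n" using exh by blast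
  then show ?thesis unfolding cp_def using graded.gcomp_ex[OF graded_inst, of v p n] by simp
qed

lemma cp_W: "v \<in> A n \<Longrightarrow> cp n v q \<in> Wl q n" using cp_ex by blast
lemma cp_fin: "v \<in> A n \<Longrightarrow> finite {q. cp n v q \<noteq> 0}" using cp_ex by blast

lemma sumW_A: "(\<And>q. \<phi> q \<in> Wl q n) \<Longrightarrow> sum \<phi> S \<in> A n"
  by (rule subspace_sum[OF A_sub]) (use Wl_F F_A in blast)

lemma cp_unique: "(\<And>q. \<phi> q \<in> Wl q n) \<Longrightarrow> finite S \<Longrightarrow> (\<And>q. \<phi> q \<noteq> 0 \<Longrightarrow> q \<in> S) \<Longrightarrow>
    cp n (sum \<phi> S) = \<phi>"
  unfolding cp_def using graded.gcomp_unique[OF graded_inst, of \<phi> n S "sum \<phi> S"] by simp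

lemma cp_low: "v \<in> F p n \<Longrightarrow> q < p \<Longrightarrow> cp n v q = 0"
  unfolding cp_def using graded.gcomp_low[OF graded_inst, of v p n q] by simp

lemma cp_inF: "v \<in> A n \<Longrightarrow> (\<And>q. q < p \<Longrightarrow> cp n v q = 0) \<Longrightarrow> v \<in> F p n"
proof -
  assume a: "v \<in> A n" "\<And>q. q < p \<Longrightarrow> cp n v q = 0"
  then obtain r where "v \<in> F r n" using exh by blast
  then show ?thesis unfolding cp_def using graded.gcomp_in_G[OF graded_inst, of v r n p] a
    unfolding cp_def by simp
qed

lemma cp_add: "v \<in> A n \<Longrightarrow> w \<in> A n \<Longrightarrow> cp n (v + w) = (\<lambda>q. cp n v q + cp n w q)"
proof -
  assume a: "v \<in> A n" "w \<in> A n"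
  then obtain p r where "v \<in> F p n" "w \<in> F r n" using exh by blast
  then show ?thesis unfolding cp_def using graded.gcomp_add[OF graded_inst] by simp
qed

lemma cp_scale: "v \<in> A n \<Longrightarrow> cp n (s c v) = (\<lambda>q. s c (cp n v q))"
proof -
  assume a: "v \<in> A n"
  then obtain p where "v \<in> F p n" using exh by blast
  then show ?thesis unfolding cp_def using graded.gcomp_scale[OF graded_inst] by simp
qed

lemma cp_zero: "cp n 0 = (\<lambda>q. 0)"
  unfolding cp_def using graded.gcomp_zero[OF graded_inst] by simp

lemma cp_all_zero: "v \<in> A n \<Longrightarrow> (\<And>q. cp n v q = 0) \<Longrightarrow> v = 0"
  using cp_ex[of v n] by simp

lemma cp_sum_eq: "v \<in> A n \<Longrightarrow> finite S \<Longrightarrow> (\<And>q. cp n v q \<noteq> 0 \<Longrightarrow> q \<in> S) \<Longrightarrow> v = sum (cp n v) S"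
proof -
  assume a: "v \<in> A n" "finite S" "\<And>q. cp n v q \<noteq> 0 \<Longrightarrow> q \<in> S"
  then obtain p where "v \<in> F p n" using exh by blast
  then show ?thesis unfolding cp_def using graded.gcomp_sum_eq[OF graded_inst, of v p n S] a
    unfolding cp_def by simp
qed

lemma Cl_W: "x \<in> Cl q n \<Longrightarrow> x \<in> Wl q n"
proof -
  assume "x \<in> Cl q n"
  moreover have "x = x + 0 + 0" by simp
  ultimately show ?thesis unfolding Wl_def using subspace_0[OF Hl_sub] subspace_0[OF Dl_sub] by blast
qed
lemma Hl_W: "x \<in> Hl q n \<Longrightarrow> x \<in> Wl q n"
proof -
  assume "x \<in> Hl q n"
  moreover have "x = 0 + x + 0" by simp
  ultimately show ?thesis unfolding Wl_def using subspace_0[OF Cl_sub] subspace_0[OF Dl_sub] by blast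
qed
lemma Dl_W: "x \<in> Dl q n \<Longrightarrow> x \<in> Wl q n"
proof -
  assume "x \<in> Dl q n"
  moreover have "x = 0 + 0 + x" by simp
  ultimately show ?thesis unfolding Wl_def using subspace_0[OF Hl_sub] subspace_0[OF Cl_sub] by blast
qed

lemma Cg_A: "x \<in> Cg n \<Longrightarrow> x \<in> A n" by (simp add: Cg_def)
lemma Hg_A: "x \<in> Hg n \<Longrightarrow> x \<in> A n" by (simp add: Hg_def)

lemma Cg_sub: "subspace (Cg n)"
proof (rule subspaceI)
  show "0 \<in> Cg n" by (simp add: Cg_def cp_zero A0 subspace_0[OF Cl_sub])
next
  fix x y assume "x \<in> Cg n" "y \<in> Cg n"
  then show "x + y \<in> Cg n"
    by (simp add: Cg_def cp_add subspace_add[OF A_sub] subspace_add[OF Cl_sub])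
next
  fix c x assume "x \<in> Cg n"
  then show "s c x \<in> Cg n"
    by (simp add: Cg_def cp_scale subspace_scale[OF A_sub] subspace_scale[OF Cl_sub])
qed

lemma Hg_sub: "subspace (Hg n)"
proof (rule subspaceI)
  show "0 \<in> Hg n" by (simp add: Hg_def cp_zero A0 subspace_0[OF Hl_sub])
next
  fix x y assume "x \<in> Hg n" "y \<in> Hg n"
  then show "x + y \<in> Hg n"
    by (simp add: Hg_def cp_add subspace_add[OF A_sub] subspace_add[OF Hl_sub])
next
  fix c x assume "x \<in> Hg n"
  then show "s c x \<in> Hg n"
    by (simp add: Hg_def cp_scale subspace_scale[OF A_sub] subspace_scale[OF Hl_sub])
qed

lemma cp_d: assumes c: "c \<in> Cg n" shows "cp (n + 1) (d n c) = (\<lambda>q. d n (cp n c q))"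
proof -
  define S where "S = {q. cp n c q \<noteq> 0}"
  have cA: "c \<in> A n" using c by (simp add: Cg_def)
  have S: "finite S" using cp_fin[OF cA] by (simp add: S_def)
  have ceq: "c = sum (cp n c) S" using cp_ex[OF cA] by (simp add: S_def)
  have cq: "cp n c q \<in> Cl q n" for q using c by (simp add: Cg_def)
  have "d n c = d n (sum (cp n c) S)" using ceq by (rule arg_cong)
  also have "\<dots> = sum (\<lambda>q. d n (cp n c q)) S" by (rule d_sum) (use cq Cl_A in blast)
  finally have e: "d n c = sum (\<lambda>q. d n (cp n c q)) S" .
  have D: "d n (cp n c q) \<in> Wl q (n + 1)" for q
    using cq[of q] by (intro Dl_W) (simp add: Dl_def)
  show ?thesis unfolding e
    by (rule cp_unique[OF D S]) (auto simp: S_def d_zero)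
qed

lemma Dg_char: "Dg n = {v \<in> A n. \<forall>q. cp n v q \<in> Dl q n}"
proof
  show "Dg n \<subseteq> {v \<in> A n. \<forall>q. cp n v q \<in> Dl q n}"
  proof
    fix v assume "v \<in> Dg n"
    then obtain c where c: "c \<in> Cg (n - 1)" "v = d (n - 1) c" by (auto simp: Dg_def)
    have "cp (n - 1 + 1) (d (n - 1) c) = (\<lambda>q. d (n - 1) (cp (n - 1) c q))" by (rule cp_d[OF c(1)])
    then have "cp n v = (\<lambda>q. d (n - 1) (cp (n - 1) c q))" using c by simp
    moreover have "cp (n - 1) c q \<in> Cl q (n - 1)" for q using c by (simp add: Cg_def)
    ultimately have "\<forall>q. cp n v q \<in> Dl q n" by (simp add: Dl_def)
    moreover have "v \<in> A n" using c d_A' Cg_A by blast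
    ultimately show "v \<in> {v \<in> A n. \<forall>q. cp n v q \<in> Dl q n}" by simp
  qed
next
  show "{v \<in> A n. \<forall>q. cp n v q \<in> Dl q n} \<subseteq> Dg n"
  proof
    fix v assume v: "v \<in> {v \<in> A n. \<forall>q. cp n v q \<in> Dl q n}"
    then have vA: "v \<in> A n" and vD: "\<And>q. cp n v q \<in> Dl q n" by auto
    define cf where "cf q = (if cp n v q = 0 then 0 else SOME c. c \<in> Cl q (n - 1) \<and> cp n v q = d (n - 1) c)" for q
    have cf: "cf q \<in> Cl q (n - 1) \<and> cp n v q = d (n - 1) (cf q)" for q
    proof (cases "cp n v q = 0")
      case True then show ?thesis by (simp add: cf_def subspace_0[OF Cl_sub] d_zero)
    next
      case False
      have ex: "\<exists>c. c \<in> Cl q (n - 1) \<and> cp n v q = d (n - 1) c" using vD[of q] by (auto simp: Dl_def)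
      show ?thesis using False someI_ex[OF ex] unfolding cf_def by simp
    qed
    define S where "S = {q. cp n v q \<noteq> 0}"
    have S: "finite S" using cp_fin[OF vA] by (simp add: S_def)
    define c where "c = sum cf S"
    have cpc: "cp (n - 1) c = cf" unfolding c_def
    proof (rule cp_unique[OF _ S])
      fix q show "cf q \<in> Wl q (n - 1)" using cf[of q] Cl_W by blast
    next
      fix q assume "cf q \<noteq> 0" then show "q \<in> S" unfolding S_def cf_def by (cases "cp n v q = 0") auto
    qed
    have cA: "c \<in> A (n - 1)" unfolding c_def by (rule sumW_A) (use cf Cl_W in blast)
    have cC: "c \<in> Cg (n - 1)" using cA cpc cf by (simp add: Cg_def)
    have "d (n - 1) c = sum (\<lambda>q. d (n - 1) (cf q)) S" unfolding c_def
      by (rule d_sum) (use cf Cl_A in blast)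
    also have "\<dots> = sum (cp n v) S" using cf by simp
    also have "\<dots> = v" using cp_ex[OF vA] by (simp add: S_def)
    finally show "v \<in> Dg n" using cC unfolding Dg_def by blast
  qed
qed

lemma Dg_A: "x \<in> Dg n \<Longrightarrow> x \<in> A n" by (simp add: Dg_char)

lemma Dg_sub: "subspace (Dg n)"
proof (rule subspaceI)
  show "0 \<in> Dg n" by (simp add: Dg_char cp_zero A0 subspace_0[OF Dl_sub])
next
  fix x y assume "x \<in> Dg n" "y \<in> Dg n"
  then show "x + y \<in> Dg n"
    by (simp add: Dg_char cp_add subspace_add[OF A_sub] subspace_add[OF Dl_sub])
next
  fix c x assume "x \<in> Dg n"
  then show "s c x \<in> Dg n"
    by (simp add: Dg_char cp_scale subspace_scale[OF A_sub] subspace_scale[OF Dl_sub])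
qed

lemma dC_D: "c \<in> Cg n \<Longrightarrow> d n c \<in> Dg (n + 1)"
  unfolding Dg_def by simp

lemma G2:
  assumes a: "a \<in> F p n"
  shows "\<exists>c h e. c \<in> Cg n \<and> h \<in> Hg n \<and> e \<in> Dg n \<and> c \<in> F p n \<and> h \<in> F p n \<and> e \<in> F p n \<and> a = c + h + e"
proof -
  have aA: "a \<in> A n" using a F_A by blast
  define P where "P q t \<longleftrightarrow> fst t \<in> Cl q n \<and> fst (snd t) \<in> Hl q n \<and> snd (snd t) \<in> Dl q n \<and>
      cp n a q = fst t + fst (snd t) + snd (snd t)" for q t
  have ex: "\<exists>t. P q t" for q
  proof -
    obtain c h e where "c \<in> Cl q n" "h \<in> Hl q n" "e \<in> Dl q n" "cp n a q = c + h + e"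
      using cp_W[OF aA, of q] unfolding Wl_def by blast
    then have "P q (c, h, e)" by (simp add: P_def)
    then show ?thesis by blast
  qed
  define cf where "cf q = fst (SOME t. P q t)" for q
  define hf where "hf q = fst (snd (SOME t. P q t))" for q
  define ef where "ef q = snd (snd (SOME t. P q t))" for q
  have f: "cf q \<in> Cl q n \<and> hf q \<in> Hl q n \<and> ef q \<in> Dl q n \<and> cp n a q = cf q + hf q + ef q" for q
    using someI_ex[OF ex[of q]] unfolding cf_def hf_def ef_def P_def by simp
  have z: "cp n a q = 0 \<Longrightarrow> cf q = 0 \<and> hf q = 0 \<and> ef q = 0" for q
  proof -
    assume "cp n a q = 0"
    then have "cf q + hf q + ef q = 0 + 0 + 0" using f[of q] by simp
    then show ?thesis using W_split_unique[of "cf q" q n "hf q" "ef q" 0 0 0] f[of q]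
      subspace_0[OF Cl_sub] subspace_0[OF Hl_sub] subspace_0[OF Dl_sub] by blast
  qed
  define S where "S = {q. cp n a q \<noteq> 0}"
  have S: "finite S" using cp_fin[OF aA] by (simp add: S_def)
  have sup: "cp n a q = 0" if "q \<notin> S" for q using that by (simp add: S_def)
  define c where "c = sum cf S"
  define h where "h = sum hf S"
  define e where "e = sum ef S"
  have cpc: "cp n c = cf" unfolding c_def
  proof (rule cp_unique[OF _ S])
    fix q show "cf q \<in> Wl q n" using f[of q] Cl_W by blast
  next
    fix q assume "cf q \<noteq> 0" then show "q \<in> S" using z[of q] by (auto simp: S_def)
  qed
  have cph: "cp n h = hf" unfolding h_def
  proof (rule cp_unique[OF _ S])
    fix q show "hf q \<in> Wl q n" using f[of q] Hl_W by blast
  next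
    fix q assume "hf q \<noteq> 0" then show "q \<in> S" using z[of q] by (auto simp: S_def)
  qed
  have cpe: "cp n e = ef" unfolding e_def
  proof (rule cp_unique[OF _ S])
    fix q show "ef q \<in> Wl q n" using f[of q] Dl_W by blast
  next
    fix q assume "ef q \<noteq> 0" then show "q \<in> S" using z[of q] by (auto simp: S_def)
  qed
  have cA: "c \<in> A n" unfolding c_def by (rule sumW_A) (use f Cl_W in blast)
  have hA: "h \<in> A n" unfolding h_def by (rule sumW_A) (use f Hl_W in blast)
  have eA: "e \<in> A n" unfolding e_def by (rule sumW_A) (use f Dl_W in blast)
  have low: "q < p \<Longrightarrow> cf q = 0 \<and> hf q = 0 \<and> ef q = 0" for q using z cp_low[OF a] by blast
  have "c \<in> Cg n" using cA cpc f by (simp add: Cg_def)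
  moreover have "h \<in> Hg n" using hA cph f by (simp add: Hg_def)
  moreover have "e \<in> Dg n" using eA cpe f by (simp add: Dg_char)
  moreover have "c \<in> F p n" by (rule cp_inF[OF cA]) (simp add: cpc low)
  moreover have "h \<in> F p n" by (rule cp_inF[OF hA]) (simp add: cph low)
  moreover have "e \<in> F p n" by (rule cp_inF[OF eA]) (simp add: cpe low)
  moreover have "a = c + h + e"
  proof -
    have "a = sum (cp n a) S" using cp_ex[OF aA] by (simp add: S_def)
    also have "\<dots> = sum (\<lambda>q. cf q + hf q + ef q) S" using f by simp
    also have "\<dots> = c + h + e" by (simp add: c_def h_def e_def sum.distrib)
    finally show ?thesis .
  qed
  ultimately show ?thesis by blast
qed

lemma G3:
  assumes "c \<in> Cg n" "h \<in> Hg n" "e \<in> Dg n" "c + h + e = 0"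
  shows "c = 0 \<and> h = 0 \<and> e = 0"
proof -
  have A: "c \<in> A n" "h \<in> A n" "e \<in> A n" using assms Cg_A Hg_A Dg_A by auto
  have "cp n (c + h + e) = (\<lambda>q. cp n c q + cp n h q + cp n e q)"
    using A by (simp add: cp_add subspace_add[OF A_sub])
  then have s0: "cp n c q + cp n h q + cp n e q = 0" for q using assms(4) cp_zero by (metis)
  have "cp n c q = 0 \<and> cp n h q = 0 \<and> cp n e q = 0" for q
    using W_split_unique[of "cp n c q" q n "cp n h q" "cp n e q" 0 0 0] s0[of q] assms(1-3)
      subspace_0[OF Cl_sub] subspace_0[OF Hl_sub] subspace_0[OF Dl_sub]
    by (auto simp: Cg_def Hg_def Dg_char)
  then show ?thesis using cp_all_zero A by metis
qed

lemma G5: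
  assumes c: "c \<in> Cg n" and dc: "d n c \<in> F p (n + 1)"
  shows "c \<in> F p n"
proof (rule cp_inF)
  show "c \<in> A n" using c Cg_A by blast
next
  fix q assume "q < p"
  then have "cp (n + 1) (d n c) q = 0" using cp_low[OF dc] by blast
  then have "d n (cp n c q) = 0" using cp_d[OF c] by metis
  moreover have cq: "cp n c q \<in> Cl q n" using c by (simp add: Cg_def)
  ultimately show "cp n c q = 0" using LC[OF cq] F0 by simp
qed

lemma d_inj: "c \<in> Cg n \<Longrightarrow> d n c = 0 \<Longrightarrow> c = 0"
  using G5[of c n "Pn n"] F0 Pn by auto

lemma G6:
  assumes h: "h \<in> Hg n" and hp: "h \<in> F p n"
  shows "d n h \<in> F (p + 1) (n + 1)"
proof -
  define S where "S = {q. cp n h q \<noteq> 0}"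
  have hA: "h \<in> A n" using h Hg_A by blast
  have S: "finite S" using cp_fin[OF hA] by (simp add: S_def)
  have heq: "h = sum (cp n h) S" using cp_ex[OF hA] by (simp add: S_def)
  have hq: "cp n h q \<in> Hl q n" for q using h by (simp add: Hg_def)
  have "d n h = d n (sum (cp n h) S)" using heq by (rule arg_cong)
  also have "\<dots> = sum (\<lambda>q. d n (cp n h q)) S" by (rule d_sum) (use hq Hl_F F_A in blast)
  finally have e: "d n h = sum (\<lambda>q. d n (cp n h q)) S" .
  have "sum (\<lambda>q. d n (cp n h q)) S \<in> F (p + 1) (n + 1)"
  proof (rule subspace_sum[OF F_sub])
    fix q assume "q \<in> S"
    then have "p \<le> q" using cp_low[OF hp] by (force simp: S_def)
    moreover have "d n (cp n h q) \<in> F (q + 1) (n + 1)" using hq[of q] Hl_Z by (auto simp: Z1_def)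
    ultimately show "d n (cp n h q) \<in> F (p + 1) (n + 1)" using F_mono[of "p + 1" "q + 1"] by auto
  qed
  then show ?thesis using e by simp
qed

end


context fcx
begin

lemma add3: fixes a b x1 x2 x3 y1 y2 y3 :: 'a shows "a = x1 + x2 + x3 \<Longrightarrow> b = y1 + y2 + y3 \<Longrightarrow> a + b = (x1 + y1) + (x2 + y2) + (x3 + y3)"
  by (simp add: algebra_simps)
lemma scale3: "a = x1 + x2 + x3 \<Longrightarrow> s c a = s c x1 + s c x2 + s c x3"
  by (simp add: scale_right_distrib)

definition dec :: "int \<Rightarrow> 'a \<Rightarrow> 'a \<Rightarrow> 'a \<Rightarrow> 'a \<Rightarrow> bool" where
  "dec n a c h e \<longleftrightarrow> c \<in> Cg n \<and> h \<in> Hg n \<and> e \<in> Dg n \<and> a = c + h + e"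

definition pC where "pC n a = (THE c. \<exists>h e. dec n a c h e)"
definition pH where "pH n a = (THE h. \<exists>c e. dec n a c h e)"
definition pD where "pD n a = (THE e. \<exists>c h. dec n a c h e)"

lemma dec_unique:
  assumes "dec n a c h e" "dec n a c' h' e'"
  shows "c = c' \<and> h = h' \<and> e = e'"
proof -
  have m: "c - c' \<in> Cg n" "h - h' \<in> Hg n" "e - e' \<in> Dg n"
    using assms subspace_diff[OF Cg_sub] subspace_diff[OF Hg_sub] subspace_diff[OF Dg_sub]
    by (auto simp: dec_def)
  have "(c - c') + (h - h') + (e - e') = 0" using assms by (auto simp: dec_def algebra_simps)
  then show ?thesis using G3[OF m] by simp
qed

lemma pi_eq:
  assumes "dec n a c h e"
  shows "pC n a = c" "pH n a = h" "pD n a = e"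
proof -
  show "pC n a = c" unfolding pC_def
    by (rule the_equality) (use assms dec_unique in blast)+
  show "pH n a = h" unfolding pH_def
    by (rule the_equality) (use assms dec_unique in blast)+
  show "pD n a = e" unfolding pD_def
    by (rule the_equality) (use assms dec_unique in blast)+
qed

lemma pi_F:
  assumes "a \<in> F p n"
  shows "dec n a (pC n a) (pH n a) (pD n a) \<and> pC n a \<in> F p n \<and> pH n a \<in> F p n \<and> pD n a \<in> F p n"
proof -
  obtain c h e where "c \<in> Cg n \<and> h \<in> Hg n \<and> e \<in> Dg n \<and> c \<in> F p n \<and> h \<in> F p n \<and> e \<in> F p n \<and> a = c + h + e"
    using G2[OF assms] by blast
  moreover then have "dec n a c h e" by (simp add: dec_def)
  ultimately show ?thesis using pi_eq[of n a c h e] by simp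
qed

lemma pi_dec: "a \<in> A n \<Longrightarrow> dec n a (pC n a) (pH n a) (pD n a)"
  using exh pi_F by blast

lemma pC_C: "a \<in> A n \<Longrightarrow> pC n a \<in> Cg n" using pi_dec by (simp add: dec_def)
lemma pH_H: "a \<in> A n \<Longrightarrow> pH n a \<in> Hg n" using pi_dec by (simp add: dec_def)
lemma pD_D: "a \<in> A n \<Longrightarrow> pD n a \<in> Dg n" using pi_dec by (simp add: dec_def)
lemma pi_sum: "a \<in> A n \<Longrightarrow> a = pC n a + pH n a + pD n a" using pi_dec by (simp add: dec_def)

lemma pi_add:
  assumes "a \<in> A n" "b \<in> A n"
  shows "pC n (a + b) = pC n a + pC n b" "pH n (a + b) = pH n a + pH n b" "pD n (a + b) = pD n a + pD n b"
proof -
  have "dec n (a + b) (pC n a + pC n b) (pH n a + pH n b) (pD n a + pD n b)"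
    using pi_dec[OF assms(1)] pi_dec[OF assms(2)]
      subspace_add[OF Cg_sub] subspace_add[OF Hg_sub] subspace_add[OF Dg_sub]
      add3[OF pi_sum[OF assms(1)] pi_sum[OF assms(2)]]
    unfolding dec_def by blast
  then show "pC n (a + b) = pC n a + pC n b" "pH n (a + b) = pH n a + pH n b" "pD n (a + b) = pD n a + pD n b"
    using pi_eq by blast+
qed

lemma pi_scale:
  assumes "a \<in> A n"
  shows "pC n (s c a) = s c (pC n a)" "pH n (s c a) = s c (pH n a)" "pD n (s c a) = s c (pD n a)"
proof -
  have "dec n (s c a) (s c (pC n a)) (s c (pH n a)) (s c (pD n a))"
    using pi_dec[OF assms(1)]
      subspace_scale[OF Cg_sub] subspace_scale[OF Hg_sub] subspace_scale[OF Dg_sub]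
      scale3[OF pi_sum[OF assms(1)]]
    unfolding dec_def by blast
  then show "pC n (s c a) = s c (pC n a)" "pH n (s c a) = s c (pH n a)" "pD n (s c a) = s c (pD n a)"
    using pi_eq by blast+
qed

lemma pi_diff:
  assumes "a \<in> A n" "b \<in> A n"
  shows "pC n (a - b) = pC n a - pC n b" "pH n (a - b) = pH n a - pH n b" "pD n (a - b) = pD n a - pD n b"
proof -
  have ab: "a - b \<in> A n" using assms subspace_diff[OF A_sub] by blast
  have "a = (a - b) + b" by simp
  then have "pC n a = pC n (a - b) + pC n b" "pH n a = pH n (a - b) + pH n b" "pD n a = pD n (a - b) + pD n b"
    using pi_add[OF ab assms(2)] by metis+
  then show "pC n (a - b) = pC n a - pC n b" "pH n (a - b) = pH n a - pH n b" "pD n (a - b) = pD n a - pD n b"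
    by (simp_all add: algebra_simps)
qed

lemma dec_C: "c \<in> Cg n \<Longrightarrow> dec n c c 0 0"
  by (simp add: dec_def subspace_0[OF Hg_sub] subspace_0[OF Dg_sub])
lemma dec_H: "h \<in> Hg n \<Longrightarrow> dec n h 0 h 0"
  by (simp add: dec_def subspace_0[OF Cg_sub] subspace_0[OF Dg_sub])
lemma dec_D: "e \<in> Dg n \<Longrightarrow> dec n e 0 0 e"
  by (simp add: dec_def subspace_0[OF Hg_sub] subspace_0[OF Cg_sub])
lemma pD_on_D: "e \<in> Dg n \<Longrightarrow> pD n e = e" using pi_eq(3)[OF dec_D] .
lemma pD_on_C: "c \<in> Cg n \<Longrightarrow> pD n c = 0" using pi_eq(3)[OF dec_C] .
lemma pD_on_H: "h \<in> Hg n \<Longrightarrow> pD n h = 0" using pi_eq(3)[OF dec_H] .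
lemma pH_on_H: "h \<in> Hg n \<Longrightarrow> pH n h = h" using pi_eq(2)[OF dec_H] .
lemma pH_on_C: "c \<in> Cg n \<Longrightarrow> pH n c = 0" using pi_eq(2)[OF dec_C] .
lemma pC_on_C: "c \<in> Cg n \<Longrightarrow> pC n c = c" using pi_eq(1)[OF dec_C] .
lemma pD_0: "pD n 0 = 0" using pD_on_C[OF subspace_0[OF Cg_sub]] .

subsection \<open>The homotopy\<close>

definition sh :: "int \<Rightarrow> 'a \<Rightarrow> 'a" where
  "sh n a = (THE c. c \<in> Cg (n - 1) \<and> d (n - 1) c = pD n a)"

lemma sh_eq: assumes "c \<in> Cg (n - 1)" "d (n - 1) c = pD n a" shows "sh n a = c"
  unfolding sh_def
proof (rule the_equality)
  show "c \<in> Cg (n - 1) \<and> d (n - 1) c = pD n a" using assms by simp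
next
  fix c' assume "c' \<in> Cg (n - 1) \<and> d (n - 1) c' = pD n a"
  then have a: "c \<in> Cg (n - 1)" "d (n - 1) c = pD n a" "c' \<in> Cg (n - 1) \<and> d (n - 1) c' = pD n a"
    using assms by auto
  then have "d (n - 1) (c' - c) = 0" using d_diff Cg_A by simp
  moreover have "c' - c \<in> Cg (n - 1)" using a subspace_diff[OF Cg_sub] by blast
  ultimately show "c' = c" using d_inj by fastforce
qed

lemma sh_prop: "a \<in> A n \<Longrightarrow> sh n a \<in> Cg (n - 1) \<and> d (n - 1) (sh n a) = pD n a"
proof -
  assume "a \<in> A n"
  then have "pD n a \<in> Dg n" by (rule pD_D)
  then obtain c where "c \<in> Cg (n - 1)" "d (n - 1) c = pD n a" by (auto simp: Dg_def)
  then show ?thesis using sh_eq by simp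
qed

lemma sh_C: "a \<in> A (n + 1) \<Longrightarrow> sh (n + 1) a \<in> Cg n"
  using sh_prop[of a "n + 1"] by simp
lemma sh_d: "a \<in> A (n + 1) \<Longrightarrow> d n (sh (n + 1) a) = pD (n + 1) a"
  using sh_prop[of a "n + 1"] by simp
lemma sh_A: "a \<in> A n \<Longrightarrow> sh n a \<in> A (n - 1)"
  using sh_prop Cg_A by blast

lemma sh0: "a \<in> A n \<Longrightarrow> pD n a = 0 \<Longrightarrow> sh n a = 0"
  by (rule sh_eq) (simp_all add: subspace_0[OF Cg_sub] d_zero)

lemma sh_zero: "sh n 0 = 0" using sh0[OF A0 pD_0] .

lemma sh_add: "a \<in> A n \<Longrightarrow> b \<in> A n \<Longrightarrow> sh n (a + b) = sh n a + sh n b"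
  by (rule sh_eq) (use sh_prop[of a n] sh_prop[of b n] subspace_add[OF Cg_sub] d_add Cg_A pi_add
      in \<open>simp_all\<close>)

lemma sh_scale: "a \<in> A n \<Longrightarrow> sh n (s c a) = s c (sh n a)"
  by (rule sh_eq) (use sh_prop[of a n] subspace_scale[OF Cg_sub] d_scale Cg_A pi_scale
      in \<open>simp_all\<close>)

lemma sh_F: "a \<in> F p n \<Longrightarrow> sh n a \<in> F p (n - 1)"
proof -
  assume a: "a \<in> F p n"
  then have aA: "a \<in> A n" using F_A by blast
  have "d (n - 1) (sh n a) \<in> F p (n - 1 + 1)" using sh_prop[OF aA] pi_F[OF a] by simp
  then show ?thesis using G5 sh_prop[OF aA] by blast
qed

definition rho :: "int \<Rightarrow> 'a \<Rightarrow> 'a" where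
  "rho n a = sh (n + 1) (d n a) + d (n - 1) (sh n a)"

lemma rho_parts: "a \<in> A n \<Longrightarrow> sh (n + 1) (d n a) \<in> Cg n \<and> d (n - 1) (sh n a) \<in> Dg n"
proof -
  assume a: "a \<in> A n"
  have "d (n - 1) (sh n a) \<in> d (n - 1) ` Cg (n - 1)" using sh_prop[OF a] by blast
  then show ?thesis using sh_C[OF d_A[OF a]] unfolding Dg_def by blast
qed

lemma rho_A: "a \<in> A n \<Longrightarrow> rho n a \<in> A n"
  unfolding rho_def using rho_parts Cg_A Dg_A subspace_add[OF A_sub] by blast

lemma rho_add: "a \<in> A n \<Longrightarrow> b \<in> A n \<Longrightarrow> rho n (a + b) = rho n a + rho n b"
proof -
  assume ab: "a \<in> A n" "b \<in> A n"
  have 1: "sh (n + 1) (d n (a + b)) = sh (n + 1) (d n a) + sh (n + 1) (d n b)"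
    using d_add[OF ab] sh_add[OF d_A[OF ab(1)] d_A[OF ab(2)]] by simp
  have 2: "d (n - 1) (sh n (a + b)) = d (n - 1) (sh n a) + d (n - 1) (sh n b)"
    using sh_add[OF ab] d_add[OF sh_A[OF ab(1)] sh_A[OF ab(2)]] by simp
  show ?thesis unfolding rho_def 1 2 by (simp add: algebra_simps)
qed

lemma rho_scale: "a \<in> A n \<Longrightarrow> rho n (s c a) = s c (rho n a)"
  unfolding rho_def using d_scale d_A sh_scale sh_A by (simp add: scale_right_distrib)

lemma rho_zero: "rho n 0 = 0"
  unfolding rho_def by (simp add: d_zero sh_zero)

lemma rho_diff: "a \<in> A n \<Longrightarrow> b \<in> A n \<Longrightarrow> rho n (a - b) = rho n a - rho n b"
proof -
  assume ab: "a \<in> A n" "b \<in> A n"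
  then have "a - b \<in> A n" using subspace_diff[OF A_sub] by blast
  then have "rho n a = rho n (a - b) + rho n b" using rho_add[of "a - b" n b] ab by simp
  then show ?thesis by simp
qed

lemma rho_F: "a \<in> F p n \<Longrightarrow> rho n a \<in> F p n"
proof -
  assume a: "a \<in> F p n"
  have "sh (n + 1) (d n a) \<in> F p (n + 1 - 1)" using sh_F d_F a by blast
  moreover have "d (n - 1) (sh n a) \<in> F p n" using d_F' sh_F a by blast
  ultimately show ?thesis unfolding rho_def using subspace_add[OF F_sub] by simp
qed

lemma rho_d: "a \<in> A n \<Longrightarrow> rho (n + 1) (d n a) = d n (rho n a)"
proof -
  assume a: "a \<in> A n"
  have "rho (n + 1) (d n a) = sh (n + 1 + 1) (d (n + 1) (d n a)) + d n (sh (n + 1) (d n a))"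
    by (simp add: rho_def)
  also have "\<dots> = d n (sh (n + 1) (d n a))" using dd[OF a] sh_zero by simp
  also have "\<dots> = d n (rho n a)"
    unfolding rho_def using d_add[of "sh (n + 1) (d n a)" n "d (n - 1) (sh n a)"] rho_parts[OF a]
      Cg_A Dg_A dd'[OF sh_A[OF a]] by simp
  finally show ?thesis .
qed

lemma rho_C: "c \<in> Cg n \<Longrightarrow> rho n c = c"
proof -
  assume c: "c \<in> Cg n"
  have cA: "c \<in> A n" using c Cg_A by blast
  have "sh n c = 0" using sh0[OF cA pD_on_C[OF c]] .
  moreover have "sh (n + 1) (d n c) = c"
    by (rule sh_eq) (use c dC_D pD_on_D in simp_all)
  ultimately show ?thesis by (simp add: rho_def d_zero)
qed

lemma rho_D: "e \<in> Dg n \<Longrightarrow> rho n e = e"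
proof -
  assume e: "e \<in> Dg n"
  then obtain c where c: "c \<in> Cg (n - 1)" "e = d (n - 1) c" by (auto simp: Dg_def)
  have "d n e = 0" using c dd' Cg_A by simp
  moreover have "sh n e = c" by (rule sh_eq) (use c pD_on_D[OF e] in simp_all)
  ultimately show ?thesis using c by (simp add: rho_def sh_zero)
qed

lemma rho_idem: "a \<in> A n \<Longrightarrow> rho n (rho n a) = rho n a"
proof -
  assume a: "a \<in> A n"
  note p = rho_parts[OF a]
  show ?thesis unfolding rho_def[of n a]
    using rho_add[of "sh (n + 1) (d n a)" n "d (n - 1) (sh n a)"] p Cg_A Dg_A rho_C rho_D by simp
qed

definition Mc :: "int \<Rightarrow> 'a set" where "Mc n = {x \<in> A n. rho n x = 0}"
definition FMc :: "int \<Rightarrow> int \<Rightarrow> 'a set" where "FMc p n = Mc n \<inter> F p n"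
definition fm :: "int \<Rightarrow> 'a \<Rightarrow> 'a" where "fm n a = a - rho n a"

lemma Mc_sub: "subspace (Mc n)"
proof (rule subspaceI)
  show "0 \<in> Mc n" by (simp add: Mc_def A0 rho_zero)
next
  fix x y assume "x \<in> Mc n" "y \<in> Mc n"
  then show "x + y \<in> Mc n" by (simp add: Mc_def rho_add subspace_add[OF A_sub])
next
  fix c x assume "x \<in> Mc n"
  then show "s c x \<in> Mc n" by (simp add: Mc_def rho_scale subspace_scale[OF A_sub])
qed

lemma Mc_A: "x \<in> Mc n \<Longrightarrow> x \<in> A n" by (simp add: Mc_def)

lemma Mc_d: "x \<in> Mc n \<Longrightarrow> d n x \<in> Mc (n + 1)"
  using rho_d[of x n] d_A[of x n] d_zero by (simp add: Mc_def)

lemma fm_M: "a \<in> A n \<Longrightarrow> fm n a \<in> Mc n"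
  unfolding fm_def Mc_def using rho_diff rho_A rho_idem subspace_diff[OF A_sub] by simp

lemma fm_on_M: "x \<in> Mc n \<Longrightarrow> fm n x = x"
  by (simp add: fm_def Mc_def)

lemma M_key: "x \<in> Mc n \<Longrightarrow> pD n x = 0 \<and> sh (n + 1) (d n x) = 0"
proof -
  assume x: "x \<in> Mc n"
  then have xA: "x \<in> A n" by (simp add: Mc_def)
  note p = rho_parts[OF xA]
  have "sh (n + 1) (d n x) + 0 + d (n - 1) (sh n x) = 0" using x by (simp add: Mc_def rho_def)
  then have "sh (n + 1) (d n x) = 0 \<and> d (n - 1) (sh n x) = 0"
    using G3[of "sh (n + 1) (d n x)" n 0 "d (n - 1) (sh n x)"] p subspace_0[OF Hg_sub] by blast
  then show ?thesis using sh_prop[OF xA] by simp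
qed

lemma M_dF:
  assumes x: "x \<in> FMc p n"
  shows "d n x \<in> F (p + 1) (n + 1)"
proof -
  have xM: "x \<in> Mc n" and xF: "x \<in> F p n" using x by (auto simp: FMc_def)
  have xA: "x \<in> A n" using xM Mc_A by blast
  note k = M_key[OF xM]
  have dxA: "d n x \<in> A (n + 1)" using d_A[OF xA] .
  have pd0: "pD (n + 1) (d n x) = 0" using sh_d[OF dxA] k d_zero by simp
  have xs: "x = pC n x + pH n x" using pi_sum[OF xA] k by simp
  have cC: "pC n x \<in> Cg n" and hH: "pH n x \<in> Hg n" using pC_C[OF xA] pH_H[OF xA] by auto
  have cA: "pC n x \<in> A n" and hA: "pH n x \<in> A n" using cC hH Cg_A Hg_A by auto
  have hF: "pH n x \<in> F p n" using pi_F[OF xF] by blast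
  have dh: "d n (pH n x) \<in> F (p + 1) (n + 1)" using G6[OF hH hF] .
  have dx: "d n x = d n (pC n x) + d n (pH n x)" using d_add[OF cA hA] xs by metis
  have "pD (n + 1) (d n x) = pD (n + 1) (d n (pC n x)) + pD (n + 1) (d n (pH n x))"
    using dx pi_add(3)[OF d_A[OF cA] d_A[OF hA]] by simp
  also have "pD (n + 1) (d n (pC n x)) = d n (pC n x)" using pD_on_D[OF dC_D[OF cC]] .
  finally have "d n (pC n x) = - pD (n + 1) (d n (pH n x))" using pd0 by (simp add: eq_neg_iff_add_eq_0)
  moreover have "pD (n + 1) (d n (pH n x)) \<in> F (p + 1) (n + 1)" using pi_F[OF dh] by blast
  ultimately have "d n (pC n x) \<in> F (p + 1) (n + 1)" using subspace_neg[OF F_sub] by metis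
  then show ?thesis using dx dh subspace_add[OF F_sub] by metis
qed

lemma M_inj: "x \<in> Mc n \<Longrightarrow> pH n x = 0 \<Longrightarrow> x = 0"
proof -
  assume xM: "x \<in> Mc n" and h0: "pH n x = 0"
  have xA: "x \<in> A n" using xM Mc_A by blast
  note k = M_key[OF xM]
  have xs: "x = pC n x" using pi_sum[OF xA] k h0 by simp
  have cC: "pC n x \<in> Cg n" using pC_C[OF xA] .
  have dxA: "d n x \<in> A (n + 1)" using d_A[OF xA] .
  have "pD (n + 1) (d n x) = 0" using sh_d[OF dxA] k d_zero by simp
  moreover have "pD (n + 1) (d n x) = d n x" using pD_on_D[OF dC_D[OF cC]] xs by metis
  ultimately have "d n (pC n x) = 0" using xs by metis
  then show "x = 0" using d_inj[OF cC] xs by metis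
qed

end


context fcx
begin

lemma coset_mem: "subspace B \<Longrightarrow> coset B a = coset B b \<Longrightarrow> a - b \<in> B"
proof -
  assume B: "subspace B" and e: "coset B a = coset B b"
  have "a \<in> coset B a" unfolding coset_def using subspace_0[OF B] by force
  then have "a \<in> coset B b" using e by simp
  then obtain \<beta> where "\<beta> \<in> B" "a = b + \<beta>" by (auto simp: coset_def)
  then show ?thesis by simp
qed

lemma coset_eqI: "subspace B \<Longrightarrow> a - b \<in> B \<Longrightarrow> coset B a = coset B b"
proof -
  assume B: "subspace B" and ab: "a - b \<in> B"
  show ?thesis
  proof
    show "coset B a \<subseteq> coset B b"
    proof
      fix x assume "x \<in> coset B a"
      then obtain \<beta> where \<beta>: "\<beta> \<in> B" "x = a + \<beta>" by (auto simp: coset_def)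
      then have "x = b + ((a - b) + \<beta>)" by simp
      moreover have "(a - b) + \<beta> \<in> B" using ab \<beta> subspace_add[OF B] by blast
      ultimately show "x \<in> coset B b" unfolding coset_def by blast
    qed
  next
    show "coset B b \<subseteq> coset B a"
    proof
      fix x assume "x \<in> coset B b"
      then obtain \<beta> where \<beta>: "\<beta> \<in> B" "x = b + \<beta>" by (auto simp: coset_def)
      then have "x = a + (\<beta> - (a - b))" by simp
      moreover have "\<beta> - (a - b) \<in> B" using ab \<beta> subspace_diff[OF B] by blast
      ultimately show "x \<in> coset B a" unfolding coset_def by blast
    qed
  qed
qed

lemma coset_0: "subspace B \<Longrightarrow> coset B 0 = B"
  by (auto simp: coset_def)

lemma coset_add: "subspace B \<Longrightarrow> {x + y | x y. x \<in> coset B a \<and> y \<in> coset B b} = coset B (a + b)"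
proof -
  assume B: "subspace B"
  show ?thesis
  proof
    show "{x + y | x y. x \<in> coset B a \<and> y \<in> coset B b} \<subseteq> coset B (a + b)"
    proof
      fix z assume "z \<in> {x + y | x y. x \<in> coset B a \<and> y \<in> coset B b}"
      then obtain \<beta>1 \<beta>2 where "\<beta>1 \<in> B" "\<beta>2 \<in> B" "z = (a + \<beta>1) + (b + \<beta>2)"
        by (auto simp: coset_def)
      moreover then have "z = (a + b) + (\<beta>1 + \<beta>2)" by (simp add: algebra_simps)
      ultimately show "z \<in> coset B (a + b)" using subspace_add[OF B] by (auto simp: coset_def)
    qed
  next
    show "coset B (a + b) \<subseteq> {x + y | x y. x \<in> coset B a \<and> y \<in> coset B b}"
    proof
      fix z assume "z \<in> coset B (a + b)"
      then obtain \<beta> where \<beta>: "\<beta> \<in> B" "z = (a + b) + \<beta>" by (auto simp: coset_def)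
      then have "z = (a + \<beta>) + (b + 0)" by (simp add: algebra_simps)
      moreover have "a + \<beta> \<in> coset B a" "b + 0 \<in> coset B b"
        using \<beta> subspace_0[OF B] by (auto simp: coset_def)
      ultimately show "z \<in> {x + y | x y. x \<in> coset B a \<and> y \<in> coset B b}" by blast
    qed
  qed
qed

lemma coset_scale: "subspace B \<Longrightarrow> {s c x + y | x y. x \<in> coset B a \<and> y \<in> B} = coset B (s c a)"
proof -
  assume B: "subspace B"
  show ?thesis
  proof
    show "{s c x + y | x y. x \<in> coset B a \<and> y \<in> B} \<subseteq> coset B (s c a)"
    proof
      fix z assume "z \<in> {s c x + y | x y. x \<in> coset B a \<and> y \<in> B}"
      then obtain \<beta>1 y where "\<beta>1 \<in> B" "y \<in> B" "z = s c (a + \<beta>1) + y"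
        by (auto simp: coset_def)
      moreover then have "z = s c a + (s c \<beta>1 + y)" by (simp add: scale_right_distrib algebra_simps)
      ultimately show "z \<in> coset B (s c a)" using subspace_add[OF B] subspace_scale[OF B]
        by (auto simp: coset_def)
    qed
  next
    show "coset B (s c a) \<subseteq> {s c x + y | x y. x \<in> coset B a \<and> y \<in> B}"
    proof
      fix z assume "z \<in> coset B (s c a)"
      then obtain \<beta> where \<beta>: "\<beta> \<in> B" "z = s c a + \<beta>" by (auto simp: coset_def)
      moreover have "a \<in> coset B a" using subspace_0[OF B] by (force simp: coset_def)
      ultimately show "z \<in> {s c x + y | x y. x \<in> coset B a \<and> y \<in> B}" by blast
    qed
  qed
qed

definition Psi :: "int \<Rightarrow> 'a \<Rightarrow> int \<Rightarrow> 'a set" where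
  "Psi n x = (\<lambda>q. coset (B1 d F q n) (cp n x q))"

definition Phi :: "int \<Rightarrow> 'a \<Rightarrow> int \<Rightarrow> 'a set" where
  "Phi n x = Psi n (pH n x)"

lemma FMc_A: "x \<in> FMc p n \<Longrightarrow> x \<in> A n" by (simp add: FMc_def Mc_def)

lemma pH_FM: "x \<in> FMc p n \<Longrightarrow> pH n x \<in> Hg n \<and> pH n x \<in> F p n"
  using pi_F[of x p n] pH_H FMc_A by (auto simp: FMc_def)

lemma Psi_in:
  assumes y: "y \<in> Hg n" "y \<in> F p n"
  shows "Psi n y \<in> E1_sum d F p n"
proof -
  have yA: "y \<in> A n" using y Hg_A by blast
  have a: "\<forall>q. p \<le> q \<longrightarrow> Psi n y q \<in> E1 d F q (n - q)"
  proof (intro allI impI)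
    fix q assume "p \<le> q"
    have "cp n y q \<in> Z1 d F q n" using y Hl_Z by (auto simp: Hg_def)
    then show "Psi n y q \<in> E1 d F q (n - q)" by (simp add: Psi_def E1_def)
  qed
  have z: "cp n y q = 0 \<Longrightarrow> Psi n y q = B1 d F q n" for q
    by (simp add: Psi_def coset_0[OF B1_sub])
  have b: "\<forall>q. q < p \<longrightarrow> Psi n y q = B1 d F q n" using z cp_low[OF y(2)] by blast
  have "{q. Psi n y q \<noteq> B1 d F q n} \<subseteq> {q. cp n y q \<noteq> 0}" using z by blast
  then have c: "finite {q. Psi n y q \<noteq> B1 d F q n}" using cp_fin[OF yA] finite_subset by blast
  show ?thesis using a b c by (simp add: E1_sum_def)
qed

lemma cp_diff: "v \<in> A n \<Longrightarrow> w \<in> A n \<Longrightarrow> cp n (v - w) = (\<lambda>q. cp n v q - cp n w q)"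
proof -
  assume vw: "v \<in> A n" "w \<in> A n"
  then have vw': "v - w \<in> A n" using subspace_diff[OF A_sub] by blast
  have "cp n v = cp n ((v - w) + w)" by simp
  also have "\<dots> = (\<lambda>q. cp n (v - w) q + cp n w q)" using cp_add[OF vw' vw(2)] .
  finally show ?thesis by (simp add: fun_eq_iff)
qed

lemma Psi_inj:
  assumes y: "y \<in> Hg n" and y': "y' \<in> Hg n" and e: "Psi n y = Psi n y'"
  shows "y = y'"
proof -
  have yA: "y \<in> A n" "y' \<in> A n" using y y' Hg_A by auto
  have "cp n y q - cp n y' q = 0" for q
  proof -
    have "coset (B1 d F q n) (cp n y q) = coset (B1 d F q n) (cp n y' q)"
      using e by (simp add: Psi_def fun_eq_iff)
    then have "cp n y q - cp n y' q \<in> B1 d F q n" using coset_mem[OF B1_sub] by blast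
    moreover have "cp n y q - cp n y' q \<in> Hl q n"
      using y y' subspace_diff[OF Hl_sub] by (simp add: Hg_def)
    ultimately show ?thesis using Hl_B by blast
  qed
  then have "y - y' = 0" using cp_all_zero[of "y - y'" n] cp_diff[OF yA] subspace_diff[OF A_sub] yA
    by simp
  then show ?thesis by simp
qed

lemma Phi_inj: "inj_on (Phi n) (FMc p n)"
proof (rule inj_onI)
  fix x x' assume x: "x \<in> FMc p n" and x': "x' \<in> FMc p n" and e: "Phi n x = Phi n x'"
  have h: "pH n x \<in> Hg n" "pH n x' \<in> Hg n" using pH_FM x x' by blast+
  have "pH n x = pH n x'" using Psi_inj[OF h] e by (simp add: Phi_def)
  then have "pH n (x - x') = 0" using pi_diff(2) FMc_A x x' by simp
  moreover have "x - x' \<in> Mc n" using x x' subspace_diff[OF Mc_sub] by (auto simp: FMc_def)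
  ultimately have "x - x' = 0" using M_inj by blast
  then show "x = x'" by simp
qed

lemma Phi_surj: "E1_sum d F p n \<subseteq> Phi n ` FMc p n"
proof
  fix \<phi> assume \<phi>: "\<phi> \<in> E1_sum d F p n"
  have ex: "\<exists>h. h \<in> Hl q n \<and> \<phi> q = coset (B1 d F q n) h" if "p \<le> q" for q
  proof -
    have "\<phi> q \<in> E1 d F q (n - q)" using \<phi> that by (simp add: E1_sum_def)
    then obtain z where z: "z \<in> Z1 d F q n" "\<phi> q = coset (B1 d F q n) z" by (auto simp: E1_def)
    obtain h b where hb: "h \<in> Hl q n" "b \<in> B1 d F q n" "z = h + b" using Z_split[OF z(1)] by blast
    have "coset (B1 d F q n) z = coset (B1 d F q n) h"
      by (rule coset_eqI[OF B1_sub]) (use hb in simp)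
    then show ?thesis using hb z by auto
  qed
  define hf where "hf q = (if \<phi> q = B1 d F q n then 0 else SOME h. h \<in> Hl q n \<and> \<phi> q = coset (B1 d F q n) h)" for q
  have low: "q < p \<Longrightarrow> \<phi> q = B1 d F q n" for q using \<phi> by (simp add: E1_sum_def)
  have hf: "hf q \<in> Hl q n \<and> \<phi> q = coset (B1 d F q n) (hf q)" for q
  proof (cases "\<phi> q = B1 d F q n")
    case True then show ?thesis by (simp add: hf_def subspace_0[OF Hl_sub] coset_0[OF B1_sub])
  next
    case False
    then have "p \<le> q" using low by force
    then show ?thesis using False someI_ex[OF ex] unfolding hf_def by simp
  qed
  define S where "S = {q. \<phi> q \<noteq> B1 d F q n}"
  have S: "finite S" using \<phi> by (simp add: E1_sum_def S_def)
  define y where "y = sum hf S"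
  have cpy: "cp n y = hf" unfolding y_def
  proof (rule cp_unique[OF _ S])
    fix q show "hf q \<in> Wl q n" using hf[of q] Hl_W by blast
  next
    fix q assume "hf q \<noteq> 0" then show "q \<in> S" by (auto simp: S_def hf_def)
  qed
  have yA: "y \<in> A n" unfolding y_def by (rule sumW_A) (use hf Hl_W in blast)
  have yH: "y \<in> Hg n" using yA cpy hf by (simp add: Hg_def)
  have yF: "y \<in> F p n" by (rule cp_inF[OF yA]) (simp add: cpy hf_def low)
  define c where "c = sh (n + 1) (d n y)"
  have dyA: "d n y \<in> A (n + 1)" using d_A[OF yA] .
  have cC: "c \<in> Cg n" using sh_C[OF dyA] by (simp add: c_def)
  have cA: "c \<in> A n" using cC Cg_A by blast
  have dc: "d n c = pD (n + 1) (d n y)" using sh_d[OF dyA] by (simp add: c_def)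
  define x where "x = y - c"
  have xA: "x \<in> A n" using yA cA subspace_diff[OF A_sub] by (simp add: x_def)
  have pDx: "pD n x = 0" using pi_diff(3)[OF yA cA] pD_on_H[OF yH] pD_on_C[OF cC] by (simp add: x_def)
  have shx: "sh n x = 0" using sh0[OF xA pDx] .
  have dx: "d n x = d n y - pD (n + 1) (d n y)" using d_diff[OF yA cA] dc by (simp add: x_def)
  have pDdyA: "pD (n + 1) (d n y) \<in> A (n + 1)" using pD_D[OF dyA] Dg_A by blast
  have "pD (n + 1) (d n x) = 0"
    using dx pi_diff(3)[OF dyA pDdyA] pD_on_D[OF pD_D[OF dyA]] by simp
  then have "sh (n + 1) (d n x) = 0" using sh0[OF d_A[OF xA]] by simp
  then have xM: "x \<in> Mc n" using xA shx by (simp add: Mc_def rho_def d_zero)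
  have cF: "c \<in> F p n" using sh_F[OF d_F[OF yF]] by (simp add: c_def)
  have xF: "x \<in> F p n" using yF cF subspace_diff[OF F_sub] by (simp add: x_def)
  have xFM: "x \<in> FMc p n" using xM xF by (simp add: FMc_def)
  have "pH n x = y" using pi_diff(2)[OF yA cA] pH_on_H[OF yH] pH_on_C[OF cC] by (simp add: x_def)
  then have "Phi n x = \<phi>" using hf by (simp add: Phi_def Psi_def cpy fun_eq_iff)
  then show "\<phi> \<in> Phi n ` FMc p n" using xFM by blast
qed

lemma Phi_in: "x \<in> FMc p n \<Longrightarrow> Phi n x \<in> E1_sum d F p n"
  using Psi_in pH_FM by (simp add: Phi_def)

lemma Phi_add:
  assumes x: "x \<in> FMc p n" and y: "y \<in> FMc p n"
  shows "Phi n (x + y) = E1_add (Phi n x) (Phi n y)"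
proof -
  have xA: "x \<in> A n" and yA: "y \<in> A n" using x y FMc_A by auto
  have hA: "pH n x \<in> A n" "pH n y \<in> A n" using pH_H[OF xA] pH_H[OF yA] Hg_A by auto
  have "cp n (pH n (x + y)) = (\<lambda>q. cp n (pH n x) q + cp n (pH n y) q)"
    using pi_add(2)[OF xA yA] cp_add[OF hA] by simp
  then show ?thesis
    by (simp add: Phi_def Psi_def E1_add_def coset_add[OF B1_sub] fun_eq_iff)
qed

lemma Phi_scale:
  assumes x: "x \<in> FMc p n"
  shows "Phi n (s c x) = E1_scale s d F n c (Phi n x)"
proof -
  have xA: "x \<in> A n" using x FMc_A by auto
  have hA: "pH n x \<in> A n" using pH_H[OF xA] Hg_A by auto
  have "cp n (pH n (s c x)) = (\<lambda>q. s c (cp n (pH n x) q))"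
    using pi_scale(2)[OF xA] cp_scale[OF hA] by simp
  then show ?thesis
    by (simp add: Phi_def Psi_def E1_scale_def coset_scale[OF B1_sub] fun_eq_iff)
qed

lemma T5: "iso_E1_sum s (FMc p n) d F p n"
  unfolding iso_E1_sum_def
proof (intro exI conjI ballI allI)
  show "bij_betw (Phi n) (FMc p n) (E1_sum d F p n)"
    unfolding bij_betw_def using Phi_inj Phi_surj Phi_in by blast
next
  fix x y assume "x \<in> FMc p n" "y \<in> FMc p n"
  then show "Phi n (x + y) = E1_add (Phi n x) (Phi n y)" by (rule Phi_add)
next
  fix c x assume "x \<in> FMc p n"
  then show "Phi n (s c x) = E1_scale s d F n c (Phi n x)" by (rule Phi_scale)
qed

end


context fcx
begin

lemma FMc_sub: "subspace (FMc p n)"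
  unfolding FMc_def by (rule subspace_inter[OF Mc_sub F_sub])

lemma T1: "filtered_complex s Mc d FMc"
  unfolding filtered_complex_def cochain_complex_def
proof (intro conjI allI)
  fix n show "subsp s (Mc n)" using Mc_sub by (simp add: subsp_iff)
next
  fix n show "lin_on s (Mc n) (d n)" unfolding lin_on_def using d_add d_scale Mc_A by blast
next
  fix n show "d n ` Mc n \<subseteq> Mc (n + 1)" using Mc_d by blast
next
  fix n show "\<forall>x\<in>Mc n. d (n + 1) (d n x) = 0" using dd Mc_A by blast
next
  fix p n show "subsp s (FMc p n)" using FMc_sub by (simp add: subsp_iff)
next
  fix p n show "FMc p n \<subseteq> Mc n" by (auto simp: FMc_def)
next
  fix p n show "FMc (p + 1) n \<subseteq> FMc p n" using F_dec by (auto simp: FMc_def)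
next
  fix p n show "d n ` FMc p n \<subseteq> FMc p (n + 1)" using Mc_d d_F by (auto simp: FMc_def)
next
  fix n show "(\<Union>p. FMc p n) = Mc n" using exh Mc_A by (auto simp: FMc_def)
next
  fix n show "\<exists>p. FMc p n = {0}"
  proof (intro exI[of _ "Pn n"])
    show "FMc (Pn n) n = {0}" using Pn subspace_0[OF FMc_sub, of "Pn n" n] by (auto simp: FMc_def)
  qed
qed

lemma fm_A: "a \<in> A n \<Longrightarrow> fm n a \<in> A n" using fm_M Mc_A by blast

lemma fm_F: "a \<in> F p n \<Longrightarrow> fm n a \<in> FMc p n"
  using fm_M F_A rho_F subspace_diff[OF F_sub] by (simp add: FMc_def fm_def)

lemma fm_d: "a \<in> A n \<Longrightarrow> fm (n + 1) (d n a) = d n (fm n a)"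
  unfolding fm_def using rho_d d_diff rho_A by simp

lemma T2: "filtered_morphism s A d F Mc d FMc fm"
  unfolding filtered_morphism_def
proof (intro conjI allI)
  fix n show "lin_on s (A n) (fm n)"
    unfolding lin_on_def fm_def using rho_add rho_scale by (simp add: algebra_simps scale_right_diff_distrib)
next
  fix n show "fm n ` A n \<subseteq> Mc n" using fm_M by blast
next
  fix n show "\<forall>x\<in>A n. fm (n + 1) (d n x) = d n (fm n x)" using fm_d by blast
next
  fix p n show "fm n ` F p n \<subseteq> FMc p n" using fm_F by blast
qed

lemma T3: "filtered_morphism s Mc d FMc A d F (\<lambda>n x. x)"
  unfolding filtered_morphism_def lin_on_def using Mc_A by (auto simp: FMc_def)

lemma T4: "filtered_homotopy s A d F A d F sh (\<lambda>n x. x) (\<lambda>n x. fm n x)"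
  unfolding filtered_homotopy_def
proof (intro conjI allI)
  fix n show "lin_on s (A n) (sh n)" unfolding lin_on_def using sh_add sh_scale by blast
next
  fix p n show "sh n ` F p n \<subseteq> F p (n - 1)" using sh_F by blast
next
  fix n show "\<forall>x\<in>A n. sh (n + 1) (d n x) + d (n - 1) (sh n x) = x - fm n x"
    by (simp add: fm_def rho_def)
qed

lemma T6: "d n ` FMc p n \<subseteq> FMc (p + 1) (n + 1)"
  using M_dF Mc_d by (auto simp: FMc_def)

lemma rho_cocycle: "y \<in> A n \<Longrightarrow> d n y = 0 \<Longrightarrow> rho n y = d (n - 1) (sh n y)"
  by (simp add: rho_def sh_zero)

lemma T7: "filtered_quasi_iso d F d FMc fm"
  unfolding filtered_quasi_iso_def quasi_iso_on_def
proof (intro allI conjI ballI impI)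
  fix p n y assume y: "y \<in> FMc p n" "d n y = 0"
  have "y \<in> F p n" using y by (simp add: FMc_def)
  moreover have "y - fm n y \<in> d (n - 1) ` FMc p (n - 1)"
    using fm_on_M[of y n] y subspace_0[OF FMc_sub] d_zero by (force simp: FMc_def)
  ultimately show "\<exists>x\<in>F p n. d n x = 0 \<and> y - fm n x \<in> d (n - 1) ` FMc p (n - 1)" using y by blast
next
  fix p n x assume x: "x \<in> F p n" "d n x = 0 \<and> fm n x \<in> d (n - 1) ` FMc p (n - 1)"
  then obtain m where m: "m \<in> FMc p (n - 1)" "fm n x = d (n - 1) m" by blast
  have xA: "x \<in> A n" using x F_A by blast
  have mA: "m \<in> A (n - 1)" using m FMc_A by blast
  have shA: "sh n x \<in> A (n - 1)" using sh_A[OF xA] .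
  have "x = rho n x + fm n x" by (simp add: fm_def)
  also have "\<dots> = d (n - 1) (sh n x) + d (n - 1) m" using rho_cocycle[OF xA] x m by simp
  also have "\<dots> = d (n - 1) (sh n x + m)" using d_add[OF shA mA] by simp
  finally have "x = d (n - 1) (sh n x + m)" .
  moreover have "sh n x + m \<in> F p (n - 1)"
    using sh_F[OF x(1)] m subspace_add[OF F_sub] by (auto simp: FMc_def)
  ultimately show "x \<in> d (n - 1) ` F p (n - 1)" by blast
qed

lemma T8: "filtered_quasi_iso d FMc d F (\<lambda>n x. x)"
  unfolding filtered_quasi_iso_def quasi_iso_on_def
proof (intro allI conjI ballI impI)
  fix p n y assume y: "y \<in> F p n" "d n y = 0"
  have yA: "y \<in> A n" using y F_A by blast
  have "fm n y \<in> FMc p n" using fm_F[OF y(1)] .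
  moreover have "d n (fm n y) = 0"
    using fm_d[OF yA] y d_zero rho_zero by (simp add: fm_def)
  moreover have "y - fm n y \<in> d (n - 1) ` F p (n - 1)"
    using rho_cocycle[OF yA y(2)] sh_F[OF y(1)] by (simp add: fm_def)
  ultimately show "\<exists>x\<in>FMc p n. d n x = 0 \<and> y - x \<in> d (n - 1) ` F p (n - 1)" by blast
next
  fix p n x assume x: "x \<in> FMc p n" "d n x = 0 \<and> x \<in> d (n - 1) ` F p (n - 1)"
  then obtain a where a: "a \<in> F p (n - 1)" "x = d (n - 1) a" by blast
  have aA: "a \<in> A (n - 1)" using a F_A by blast
  have xM: "x \<in> Mc n" using x by (simp add: FMc_def)
  have "fm (n - 1 + 1) (d (n - 1) a) = d (n - 1) (fm (n - 1) a)" using fm_d[OF aA] .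
  then have "fm n x = d (n - 1) (fm (n - 1) a)" using a by simp
  then have "x = d (n - 1) (fm (n - 1) a)" using fm_on_M[OF xM] by simp
  moreover have "fm (n - 1) a \<in> FMc p (n - 1)" using fm_F[OF a(1)] .
  ultimately show "x \<in> d (n - 1) ` FMc p (n - 1)" by blast
qed

end

theorem theorem2p7:
  fixes s :: "'k::field \<Rightarrow> 'a::ab_group_add \<Rightarrow> 'a"
    and A :: "int \<Rightarrow> 'a set" and d :: "int \<Rightarrow> 'a \<Rightarrow> 'a" and F :: "int \<Rightarrow> int \<Rightarrow> 'a set"
  assumes "vector_space s"
    and "filtered_complex s A d F"
  shows "\<exists>(M :: int \<Rightarrow> 'a set) dM FM f g h.
           filtered_complex s M dM FM \<and>
           filtered_morphism s A d F M dM FM f \<and>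
           filtered_morphism s M dM FM A d F g \<and>
           filtered_homotopy s A d F A d F h (\<lambda>n x. x) (\<lambda>n x. g n (f n x)) \<and>
           (\<forall>p n. iso_E1_sum s (FM p n) d F p n) \<and>
           (\<forall>p n. dM n ` FM p n \<subseteq> FM (p + 1) (n + 1)) \<and>
           filtered_quasi_iso d F dM FM f \<and>
           filtered_quasi_iso dM FM d F g"
proof -
  interpret fcx s A d F
    by (intro fcx.intro fcx_axioms.intro assms)
  show ?thesis
    apply (rule exI[of _ Mc], rule exI[of _ d], rule exI[of _ FMc], rule exI[of _ fm],
        rule exI[of _ "\<lambda>n x. x"], rule exI[of _ sh])
    using T1 T2 T3 T4 T5 T6 T7 T8 by simp
qed

end
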